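(* If $X$ is a connected weighted unicyclic graph whose cycle $C_p$ (with the weights inherited from $X$) has nonsingular subdivision $S(C_p)$, then no vertex of $S(X)$ is sedentary. In particular, if $X$ is a connected unweighted non-bipartite unicyclic graph, then no vertex of $S(X)$ is sedentary.
   Context: Graphs are simple, undirected, with nonzero real edge weights; $A(\cdot)$ is the weighted adjacency matrix; unweighted means all weights are $1$; nonsingular means the adjacency matrix is invertible. The subdivision $S(X)$ replaces each edge $\{u,v\}$ of weight $\omega$ by a new vertex $w$ and edges $\{u,w\},\{w,v\}$ of weight $\omega$. With $U(t)=e^{itA}$, a vertex $u$ is sedentary if $\inf_{t>0}|U(t)_{u,u}|\ge C$ for some $0<C\le1$, and not sedentary if the infimum is $0$. *)

theory Defs
  imports "HOL-Analysis.Analysis"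
begin

text \<open>A weighted graph is a finite vertex set V together with a weight function w;
  {u,v} is an edge iff w u v is nonzero. The weighted adjacency matrix is w restricted to V.\<close>

definition wgraph :: "'v set \<Rightarrow> ('v \<Rightarrow> 'v \<Rightarrow> real) \<Rightarrow> bool" where
  "wgraph V w \<longleftrightarrow> finite V \<and> (\<forall>u v. w u v = w v u) \<and> (\<forall>u. w u u = 0)
     \<and> (\<forall>u v. w u v \<noteq> 0 \<longrightarrow> u \<in> V \<and> v \<in> V)"

definition edges :: "'v set \<Rightarrow> ('v \<Rightarrow> 'v \<Rightarrow> real) \<Rightarrow> 'v set set" where
  "edges V w = {{u, v} | u v. u \<in> V \<and> v \<in> V \<and> w u v \<noteq> 0}"

definition connected_graph :: "'v set \<Rightarrow> ('v \<Rightarrow> 'v \<Rightarrow> real) \<Rightarrow> bool" where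
  "connected_graph V w \<longleftrightarrow> V \<noteq> {} \<and>
     (\<forall>u\<in>V. \<forall>v\<in>V. (u, v) \<in> {(a, b). w a b \<noteq> 0}\<^sup>*)"

definition is_cycle :: "'v set \<Rightarrow> ('v \<Rightarrow> 'v \<Rightarrow> real) \<Rightarrow> 'v list \<Rightarrow> bool" where
  "is_cycle V w cs \<longleftrightarrow> length cs \<ge> 3 \<and> distinct cs \<and> set cs \<subseteq> V \<and>
     (\<forall>i < length cs. w (cs ! i) (cs ! ((i + 1) mod length cs)) \<noteq> 0)"

definition cycle_edges :: "'v list \<Rightarrow> 'v set set" where
  "cycle_edges cs = {{cs ! i, cs ! ((i + 1) mod length cs)} | i. i < length cs}"

definition unicyclic :: "'v set \<Rightarrow> ('v \<Rightarrow> 'v \<Rightarrow> real) \<Rightarrow> bool" where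
  "unicyclic V w \<longleftrightarrow> connected_graph V w \<and>
     card {cycle_edges cs | cs. is_cycle V w cs} = 1"

definition cycle_weight :: "('v \<Rightarrow> 'v \<Rightarrow> real) \<Rightarrow> 'v list \<Rightarrow> 'v \<Rightarrow> 'v \<Rightarrow> real" where
  "cycle_weight w cs a b = (if {a, b} \<in> cycle_edges cs then w a b else 0)"

text \<open>Subdivision: vertices Inl v (old) and Inr e (one new vertex per edge e).\<close>
definition subdiv_verts :: "'v set \<Rightarrow> ('v \<Rightarrow> 'v \<Rightarrow> real) \<Rightarrow> ('v + 'v set) set" where
  "subdiv_verts V w = Inl ` V \<union> Inr ` edges V w"

fun subdiv_weight :: "'v set \<Rightarrow> ('v \<Rightarrow> 'v \<Rightarrow> real) \<Rightarrow> ('v + 'v set) \<Rightarrow> ('v + 'v set) \<Rightarrow> real" where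
  "subdiv_weight V w (Inl u) (Inr e) =
     (if e \<in> edges V w \<and> u \<in> e then (\<Sum>v\<in>e - {u}. w u v) else 0)"
| "subdiv_weight V w (Inr e) (Inl u) =
     (if e \<in> edges V w \<and> u \<in> e then (\<Sum>v\<in>e - {u}. w u v) else 0)"
| "subdiv_weight V w _ _ = 0"

text \<open>Matrix powers and the transition matrix U(t) = exp(i t A) as its power series.\<close>
fun mat_pow :: "'a set \<Rightarrow> ('a \<Rightarrow> 'a \<Rightarrow> real) \<Rightarrow> nat \<Rightarrow> 'a \<Rightarrow> 'a \<Rightarrow> real" where
  "mat_pow V A 0 u v = (if u = v then 1 else 0)"
| "mat_pow V A (Suc k) u v = (\<Sum>x\<in>V. A u x * mat_pow V A k x v)"

definition transition :: "'a set \<Rightarrow> ('a \<Rightarrow> 'a \<Rightarrow> real) \<Rightarrow> real \<Rightarrow> 'a \<Rightarrow> 'a \<Rightarrow> complex" where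
  "transition V A t u v =
     (\<Sum>k. (\<i> * complex_of_real t) ^ k / of_nat (fact k) * complex_of_real (mat_pow V A k u v))"

definition sedentary :: "'a set \<Rightarrow> ('a \<Rightarrow> 'a \<Rightarrow> real) \<Rightarrow> 'a \<Rightarrow> bool" where
  "sedentary V A u \<longleftrightarrow> (\<exists>C. 0 < C \<and> C \<le> 1 \<and>
     C \<le> (INF t\<in>{0<..}. norm (transition V A t u u)))"

definition not_sedentary :: "'a set \<Rightarrow> ('a \<Rightarrow> 'a \<Rightarrow> real) \<Rightarrow> 'a \<Rightarrow> bool" where
  "not_sedentary V A u \<longleftrightarrow> (INF t\<in>{0<..}. norm (transition V A t u u)) = 0"

definition nonsingular :: "'a set \<Rightarrow> ('a \<Rightarrow> 'a \<Rightarrow> real) \<Rightarrow> bool" where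
  "nonsingular V A \<longleftrightarrow> (\<exists>B. \<forall>u\<in>V. \<forall>v\<in>V.
     (\<Sum>x\<in>V. A u x * B x v) = (if u = v then 1 else 0) \<and>
     (\<Sum>x\<in>V. B u x * A x v) = (if u = v then 1 else 0))"

definition unweighted :: "('v \<Rightarrow> 'v \<Rightarrow> real) \<Rightarrow> bool" where
  "unweighted w \<longleftrightarrow> (\<forall>u v. w u v \<noteq> 0 \<longrightarrow> w u v = 1)"

definition bipartite :: "'v set \<Rightarrow> ('v \<Rightarrow> 'v \<Rightarrow> real) \<Rightarrow> bool" where
  "bipartite V w \<longleftrightarrow> (\<exists>f :: 'v \<Rightarrow> bool. \<forall>u\<in>V. \<forall>v\<in>V. w u v \<noteq> 0 \<longrightarrow> f u \<noteq> f v)"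

end

theory Submission
  imports Defs "Jordan_Normal_Form.Determinant"
begin

definition Sr :: "(nat \<Rightarrow> real) \<Rightarrow> real \<Rightarrow> complex" where
  "Sr c t = (\<Sum>k. (\<i> * complex_of_real t) ^ k / of_nat (fact k) * complex_of_real (c k))"

lemma coef_summable:
  fixes y :: complex
  assumes b: "\<And>n. \<bar>c n\<bar> \<le> C * K ^ n"
  shows "summable (\<lambda>n. \<i> ^ n * complex_of_real (c n) / of_nat (fact n) * y ^ n)"
proof (rule summable_comparison_test')
  show "summable (\<lambda>n. C * (inverse (fact n) * (K * norm y) ^ n))"
    by (intro summable_mult summable_exp)
  fix n
  have "norm (\<i> ^ n * complex_of_real (c n) / of_nat (fact n) * y ^ n)
      = \<bar>c n\<bar> * (norm y ^ n / fact n)"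
    by (simp add: norm_mult norm_divide norm_power)
  also have "\<dots> \<le> (C * K ^ n) * (norm y ^ n / fact n)"
    by (intro mult_right_mono b) auto
  also have "\<dots> = C * (inverse (fact n) * (K * norm y) ^ n)"
    by (simp add: power_mult_distrib field_simps)
  finally show "norm (\<i> ^ n * complex_of_real (c n) / of_nat (fact n) * y ^ n)
      \<le> C * (inverse (fact n) * (K * norm y) ^ n)" .
qed

lemma Sr_eq: "Sr c t = (\<Sum>n. \<i> ^ n * complex_of_real (c n) / of_nat (fact n) * (complex_of_real t) ^ n)"
  unfolding Sr_def by (simp add: power_mult_distrib mult_ac)

lemma Sr_summable:
  assumes b: "\<And>n. \<bar>c n\<bar> \<le> C * K ^ n"
  shows "summable (\<lambda>k. (\<i> * complex_of_real t) ^ k / of_nat (fact k) * complex_of_real (c k))"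
  using coef_summable[OF b, of "complex_of_real t"] by (simp add: power_mult_distrib mult_ac)

lemma Sr_deriv:
  assumes b: "\<And>n. \<bar>c n\<bar> \<le> C * K ^ n"
  shows "(Sr c has_vector_derivative (\<i> * Sr (\<lambda>n. c (Suc n)) t)) (at t within s)"
proof -
  define coef where "coef n = \<i> ^ n * complex_of_real (c n) / of_nat (fact n)" for n
  have sm: "\<And>y. summable (\<lambda>n. coef n * y ^ n)"
    unfolding coef_def by (rule coef_summable[OF b])
  have b2: "\<bar>c (Suc n)\<bar> \<le> (C * K) * K ^ n" for n using b[of "Suc n"] by (simp add: mult_ac)
  have d: "((\<lambda>z. \<Sum>n. coef n * z ^ n) has_field_derivative (\<Sum>n. diffs coef n * (complex_of_real t) ^ n))
       (at (complex_of_real t))"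
    by (rule termdiffs_strong_converges_everywhere[OF sm])
  have "(\<Sum>n. diffs coef n * (complex_of_real t) ^ n)
      = (\<Sum>n. \<i> * (\<i> ^ n * complex_of_real (c (Suc n)) / of_nat (fact n) * (complex_of_real t) ^ n))"
  proof (rule arg_cong[where f=suminf], rule ext)
    fix n
    have f: "(of_nat (fact (Suc n)) :: complex) = of_nat (Suc n) * of_nat (fact n)"
      by (simp only: fact_Suc of_nat_mult of_nat_id)
    have nz: "(of_nat (Suc n) :: complex) \<noteq> 0" "(of_nat (fact n) :: complex) \<noteq> 0"
      by (simp only: of_nat_eq_0_iff, simp)+
    show "diffs coef n * complex_of_real t ^ n =
         \<i> * (\<i> ^ n * complex_of_real (c (Suc n)) / of_nat (fact n) * complex_of_real t ^ n)"
      unfolding diffs_def coef_def f using nz by (simp add: field_simps del: of_nat_Suc)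
  qed
  also have "\<dots> = \<i> * Sr (\<lambda>n. c (Suc n)) t"
    unfolding Sr_eq by (rule suminf_mult[OF coef_summable[OF b2]])
  finally have d2: "((\<lambda>z. \<Sum>n. coef n * z ^ n) has_field_derivative (\<i> * Sr (\<lambda>n. c (Suc n)) t))
       (at (complex_of_real t))" using d by simp
  have "Sr c = (\<lambda>x. (\<lambda>z. \<Sum>n. coef n * z ^ n) (complex_of_real x))"
    by (auto simp: fun_eq_iff Sr_eq coef_def)
  then show ?thesis using has_vector_derivative_real_field[OF d2] by simp
qed

lemma Sr_sum:
  assumes fin: "finite F" and b: "\<And>x n. x \<in> F \<Longrightarrow> \<bar>d x n\<bar> \<le> C x * K x ^ n"
  shows "Sr (\<lambda>n. \<Sum>x\<in>F. g x * d x n) t = (\<Sum>x\<in>F. complex_of_real (g x) * Sr (d x) t)"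
proof -
  have "Sr (\<lambda>n. \<Sum>x\<in>F. g x * d x n) t
     = (\<Sum>k. \<Sum>x\<in>F. complex_of_real (g x) * ((\<i> * complex_of_real t) ^ k / of_nat (fact k) * complex_of_real (d x k)))"
    unfolding Sr_def by (simp add: sum_distrib_left mult_ac)
  also have "\<dots> = (\<Sum>x\<in>F. \<Sum>k. complex_of_real (g x) * ((\<i> * complex_of_real t) ^ k / of_nat (fact k) * complex_of_real (d x k)))"
    by (rule suminf_sum, rule summable_mult, rule Sr_summable, rule b)
  also have "\<dots> = (\<Sum>x\<in>F. complex_of_real (g x) * Sr (d x) t)"
    unfolding Sr_def by (intro sum.cong refl suminf_mult, rule Sr_summable, rule b)
  finally show ?thesis .
qed

lemma no_pos:
  fixes F G g :: "real \<Rightarrow> real"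
  assumes dF: "\<And>t. (F has_real_derivative G t) (at t)"
    and dG: "\<And>t. (G has_real_derivative g t) (at t)"
    and G0: "G 0 = 0"
    and bnd: "\<And>t. F t \<le> Y"
  shows "\<exists>t\<ge>0. g t \<le> 0"
proof (rule ccontr)
  assume "\<not> ?thesis"
  then have pos: "\<And>t. t \<ge> 0 \<Longrightarrow> g t > 0" by force
  have inc: "G a < G b" if "0 \<le> a" "a < b" for a b
  proof (rule DERIV_pos_imp_increasing[OF that(2)])
    fix x assume "a \<le> x" "x \<le> b"
    then have "g x > 0" using pos that(1) by simp
    then show "\<exists>y. DERIV G x :> y \<and> y > 0" using dG by blast
  qed
  have G1: "G 1 > 0" using inc[of 0 1] G0 by simp
  define T where "T = 1 + (Y - F 1 + 1) / G 1"
  have "Y - F 1 + 1 > 0" using bnd[of 1] by simp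
  then have T1: "T > 1" unfolding T_def using G1 by simp
  obtain z where z: "1 < z" "z < T" "F T - F 1 = (T - 1) * G z"
    using MVT2[OF T1, of F G] dF by blast
  have "G z > G 1" using inc[of 1 z] z by simp
  then have "(T - 1) * G z \<ge> (T - 1) * G 1" using T1 by simp
  also have "(T - 1) * G 1 = Y - F 1 + 1" unfolding T_def using G1 by simp
  finally have "F T \<ge> Y + 1" using z by simp
  then show False using bnd[of T] by simp
qed

lemma Sr0: "Sr c 0 = complex_of_real (c 0)"
proof -
  have "(\<lambda>k. (\<i> * complex_of_real 0) ^ k / of_nat (fact k) * complex_of_real (c k))
        = (\<lambda>k. if k = 0 then complex_of_real (c 0) else 0)"
    by (auto simp: fun_eq_iff)
  moreover have "(\<lambda>k. if k = 0 then complex_of_real (c 0) else 0) sums complex_of_real (c 0)"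
    using sums_single[of 0 "\<lambda>_. complex_of_real (c 0)"] by simp
  ultimately show ?thesis unfolding Sr_def by (simp add: sums_iff)
qed

context
  fixes W :: "'a set" and A :: "'a \<Rightarrow> 'a \<Rightarrow> real"
  assumes fin: "finite W" and sym: "\<And>x y. A x y = A y x"
begin

definition KA where "KA = (\<Sum>a\<in>W. \<Sum>x\<in>W. \<bar>A a x\<bar>)"

lemma KA_nonneg: "KA \<ge> 0" unfolding KA_def by (intro sum_nonneg) auto

lemma mp_bound: "a \<in> W \<Longrightarrow> \<bar>mat_pow W A n a b\<bar> \<le> 1 * KA ^ n"
proof (induction n arbitrary: a)
  case 0 then show ?case by simp
next
  case (Suc n)
  have row: "(\<Sum>x\<in>W. \<bar>A a x\<bar>) \<le> KA"
    unfolding KA_def using Suc.prems fin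
    by (intro member_le_sum[where f="\<lambda>a. \<Sum>x\<in>W. \<bar>A a x\<bar>"]) (auto intro: sum_nonneg)
  have "\<bar>mat_pow W A (Suc n) a b\<bar> \<le> (\<Sum>x\<in>W. \<bar>A a x\<bar> * \<bar>mat_pow W A n x b\<bar>)"
    by (simp add: sum_abs[THEN order_trans] abs_mult)
  also have "\<dots> \<le> (\<Sum>x\<in>W. \<bar>A a x\<bar> * KA ^ n)"
    using Suc.IH by (intro sum_mono mult_left_mono) auto
  also have "\<dots> = (\<Sum>x\<in>W. \<bar>A a x\<bar>) * KA ^ n" by (simp add: sum_distrib_right)
  also have "\<dots> \<le> KA * KA ^ n" using row KA_nonneg by (intro mult_right_mono) auto
  finally show ?case by simp
qed

lemma mp_right: "a \<in> W \<Longrightarrow> b \<in> W \<Longrightarrow>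
   mat_pow W A (Suc n) a b = (\<Sum>x\<in>W. mat_pow W A n a x * A x b)"
proof (induction n arbitrary: a)
  case 0
  have "(\<Sum>x\<in>W. A a x * (if x = b then 1 else 0)) = A a b" using 0 fin by (simp add: if_distrib cong: if_cong)
  moreover have "(\<Sum>x\<in>W. (if a = x then 1 else 0) * A x b) = (\<Sum>x\<in>W. if a = x then A a b else 0)"
    by (rule sum.cong) auto
  moreover have "(\<Sum>x\<in>W. if a = x then A a b else 0) = A a b" using 0 fin by simp
  ultimately show ?case by simp
next
  case (Suc n)
  have "mat_pow W A (Suc (Suc n)) a b = (\<Sum>x\<in>W. A a x * (\<Sum>y\<in>W. mat_pow W A n x y * A y b))"
    using Suc.IH Suc.prems by simp
  also have "\<dots> = (\<Sum>x\<in>W. \<Sum>y\<in>W. A a x * mat_pow W A n x y * A y b)"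
    by (simp add: sum_distrib_left mult.assoc)
  also have "\<dots> = (\<Sum>y\<in>W. \<Sum>x\<in>W. A a x * mat_pow W A n x y * A y b)"
    by (rule sum.swap)
  also have "\<dots> = (\<Sum>y\<in>W. (\<Sum>x\<in>W. A a x * mat_pow W A n x y) * A y b)"
    by (simp add: sum_distrib_right)
  also have "\<dots> = (\<Sum>y\<in>W. mat_pow W A (Suc n) a y * A y b)" by simp
  finally show ?case .
qed

definition UU where "UU t a b = Sr (\<lambda>n. mat_pow W A n a b) t"

lemma dU_left:
  assumes a: "a \<in> W"
  shows "((\<lambda>t. UU t a b) has_vector_derivative (\<i> * (\<Sum>x\<in>W. complex_of_real (A a x) * UU t x b))) (at t within s)"
proof -
  have "Sr (\<lambda>n. mat_pow W A (Suc n) a b) t = Sr (\<lambda>n. \<Sum>x\<in>W. A a x * mat_pow W A n x b) t" by simp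
  also have "\<dots> = (\<Sum>x\<in>W. complex_of_real (A a x) * UU t x b)"
    unfolding UU_def by (rule Sr_sum[OF fin mp_bound])
  finally show ?thesis unfolding UU_def
    using Sr_deriv[of "\<lambda>n. mat_pow W A n a b", OF mp_bound[OF a]] by metis
qed

lemma dU_right:
  assumes a: "a \<in> W" and b: "b \<in> W"
  shows "((\<lambda>t. UU t a b) has_vector_derivative (\<i> * (\<Sum>x\<in>W. complex_of_real (A x b) * UU t a x))) (at t within s)"
proof -
  have "Sr (\<lambda>n. mat_pow W A (Suc n) a b) t = Sr (\<lambda>n. \<Sum>x\<in>W. A x b * mat_pow W A n a x) t"
    using mp_right[OF a b] by (simp add: mult_ac)
  also have "\<dots> = (\<Sum>x\<in>W. complex_of_real (A x b) * UU t a x)"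
    unfolding UU_def by (rule Sr_sum[OF fin mp_bound[OF a]])
  finally show ?thesis unfolding UU_def
    using Sr_deriv[of "\<lambda>n. mat_pow W A n a b", OF mp_bound[OF a]] by metis
qed

lemma UU0: "UU 0 a b = (if a = b then 1 else 0)"
  unfolding UU_def Sr0 by simp

lemma unitary:
  assumes b: "b \<in> W"
  shows "(\<Sum>a\<in>W. (norm (UU t a b))\<^sup>2) = 1"
proof -
  define N where "N t = (\<Sum>a\<in>W. UU t a b * cnj (UU t a b))" for t
  define d where "d t a = \<i> * (\<Sum>x\<in>W. complex_of_real (A a x) * UU t x b)" for t a
  have dN: "(N has_vector_derivative 0) (at t within UNIV)" for t
  proof -
    have "(N has_vector_derivative (\<Sum>a\<in>W. UU t a b * cnj (d t a) + d t a * cnj (UU t a b))) (at t)"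
      unfolding N_def d_def
      by (intro has_vector_derivative_sum has_vector_derivative_mult has_vector_derivative_cnj dU_left)
    moreover have "(\<Sum>a\<in>W. UU t a b * cnj (d t a) + d t a * cnj (UU t a b)) = 0"
    proof -
      define Q where "Q = (\<Sum>a\<in>W. \<Sum>x\<in>W. complex_of_real (A a x) * UU t x b * cnj (UU t a b))"
      have 1: "(\<Sum>a\<in>W. d t a * cnj (UU t a b)) = \<i> * Q"
        unfolding d_def Q_def by (simp add: sum_distrib_left sum_distrib_right mult_ac)
      have "(\<Sum>a\<in>W. UU t a b * cnj (d t a)) = - \<i> * (\<Sum>a\<in>W. \<Sum>x\<in>W. complex_of_real (A a x) * UU t a b * cnj (UU t x b))"
        unfolding d_def by (simp add: sum_distrib_left sum_distrib_right mult_ac)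
      also have "(\<Sum>a\<in>W. \<Sum>x\<in>W. complex_of_real (A a x) * UU t a b * cnj (UU t x b)) = Q"
        unfolding Q_def by (subst sum.swap) (simp add: sym)
      finally show ?thesis using 1 by (simp add: sum.distrib)
    qed
    ultimately show ?thesis by simp
  qed
  obtain c where c: "\<And>x. x \<in> UNIV \<Longrightarrow> N x = c"
    using has_vector_derivative_zero_constant[of UNIV N] dN by auto
  have "N 0 = 1" unfolding N_def UU0 using b fin by (simp add: if_distrib cong: if_cong)
  then have "N t = 1" using c by simp
  moreover have "N t = complex_of_real (\<Sum>a\<in>W. (norm (UU t a b))\<^sup>2)"
    unfolding N_def by (simp only: of_real_sum complex_norm_square)
  ultimately have "complex_of_real (\<Sum>a\<in>W. (norm (UU t a b))\<^sup>2) = 1" by simp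
  then show ?thesis by (metis of_real_1 of_real_eq_iff)
qed

lemma U_le1:
  assumes a: "a \<in> W" and b: "b \<in> W"
  shows "norm (UU t a b) \<le> 1"
proof -
  have "(norm (UU t a b))\<^sup>2 \<le> (\<Sum>a\<in>W. (norm (UU t a b))\<^sup>2)"
    using a fin by (intro member_le_sum) auto
  then have "(norm (UU t a b))\<^sup>2 \<le> 1" using unitary[OF b] by simp
  then show ?thesis by (simp add: power_le_one_iff abs_le_square_iff[symmetric]) 
qed

end

lemma vd_Re: "(f has_vector_derivative f') (at t) \<Longrightarrow> ((\<lambda>t. Re (f t)) has_real_derivative Re f') (at t)"
  unfolding has_real_derivative_iff_has_vector_derivative
  using bounded_linear.has_vector_derivative[OF bounded_linear_Re] by force

lemma Sr_real:
  assumes "\<And>n. odd n \<Longrightarrow> c n = 0" and b: "\<And>n. \<bar>c n\<bar> \<le> C * K ^ n"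
  shows "Im (Sr c t) = 0"
proof -
  have "Im ((\<i> * complex_of_real t) ^ k / of_nat (fact k) * complex_of_real (c k)) = 0" for k
  proof (cases "even k")
    case True
    then obtain m where k: "k = 2 * m" by (auto elim: evenE)
    have "(\<i> * complex_of_real t) ^ k = complex_of_real ((-1) ^ m * t ^ k)"
      unfolding k power_mult_distrib power_mult by simp
    then have "(\<i> * complex_of_real t) ^ k / of_nat (fact k) * complex_of_real (c k)
       = complex_of_real ((-1) ^ m * t ^ k / fact k * c k)" by simp
    then show ?thesis by (metis Im_complex_of_real)
  next
    case False then show ?thesis using assms(1) by simp
  qed
  then show ?thesis unfolding Sr_def by (subst Im_suminf[OF Sr_summable[OF b]]) simp
qed

context
  fixes W :: "'a set" and A :: "'a \<Rightarrow> 'a \<Rightarrow> real"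
  assumes fin: "finite W" and sym: "\<And>x y. A x y = A y x"
begin

lemma UU_trans: "UU W A t a b = transition W A t a b"
  unfolding UU_def[OF fin sym] transition_def Sr_def ..

lemma analytic_zero:
  assumes u: "u \<in> W"
    and y: "\<And>x. x \<in> W \<Longrightarrow> (\<Sum>b\<in>W. A x b * y b) = (if x = u then 1 else 0)"
    and odd0: "\<And>n. odd n \<Longrightarrow> mat_pow W A n u u = 0"
  shows "\<exists>s>0. transition W A s u u = 0"
proof -
  let ?U = "UU W A"
  have y2: "(\<Sum>a\<in>W. y a * A a x) = (if x = u then 1 else 0)" if "x \<in> W" for x
    using y[OF that] by (simp add: sym mult.commute)
  define V where "V t b = (\<Sum>a\<in>W. complex_of_real (y a) * ?U t a b)" for t b
  define \<phi> where "\<phi> t = (\<Sum>b\<in>W. complex_of_real (y b) * V t b)" for t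
  define \<psi> where "\<psi> t = \<i> * (\<Sum>b\<in>W. complex_of_real (y b) * ?U t u b)" for t
  define h where "h t = ?U t u u" for t
  have dV: "((\<lambda>t. V t b) has_vector_derivative (\<i> * ?U t u b)) (at t)" for t b
  proof -
    have "((\<lambda>t. V t b) has_vector_derivative
       (\<Sum>a\<in>W. complex_of_real (y a) * (\<i> * (\<Sum>x\<in>W. complex_of_real (A a x) * ?U t x b)))) (at t)"
      unfolding V_def
      by (intro has_vector_derivative_sum has_vector_derivative_mult_right dU_left[OF fin sym]) 
    moreover have "(\<Sum>a\<in>W. complex_of_real (y a) * (\<i> * (\<Sum>x\<in>W. complex_of_real (A a x) * ?U t x b)))
       = \<i> * ?U t u b"
    proof -
      have "(\<Sum>a\<in>W. complex_of_real (y a) * (\<i> * (\<Sum>x\<in>W. complex_of_real (A a x) * ?U t x b)))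
         = \<i> * (\<Sum>a\<in>W. \<Sum>x\<in>W. complex_of_real (y a * A a x) * ?U t x b)"
        by (simp add: sum_distrib_left mult.assoc mult.left_commute)
      also have "\<dots> = \<i> * (\<Sum>x\<in>W. \<Sum>a\<in>W. complex_of_real (y a * A a x) * ?U t x b)"
        by (subst sum.swap) (rule refl)
      also have "\<dots> = \<i> * (\<Sum>x\<in>W. complex_of_real (\<Sum>a\<in>W. y a * A a x) * ?U t x b)"
        by (simp add: sum_distrib_right of_real_sum)
      also have "\<dots> = \<i> * (\<Sum>x\<in>W. (if x = u then ?U t u b else 0))"
        by (intro arg_cong[where f="\<lambda>z. \<i> * z"] sum.cong refl) (simp add: y2)
      also have "\<dots> = \<i> * ?U t u b" using u fin by simp
      finally show ?thesis .
    qed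
    ultimately show ?thesis by simp
  qed
  have d\<phi>: "(\<phi> has_vector_derivative \<psi> t) (at t)" for t
  proof -
    have "(\<phi> has_vector_derivative (\<Sum>b\<in>W. complex_of_real (y b) * (\<i> * ?U t u b))) (at t)"
      unfolding \<phi>_def by (intro has_vector_derivative_sum has_vector_derivative_mult_right dV)
    moreover have "(\<Sum>b\<in>W. complex_of_real (y b) * (\<i> * ?U t u b)) = \<psi> t"
      unfolding \<psi>_def by (simp add: sum_distrib_left mult.left_commute)
    ultimately show ?thesis by simp
  qed
  have d\<psi>: "(\<psi> has_vector_derivative (- h t)) (at t)" for t
  proof -
    have "(\<psi> has_vector_derivative \<i> * (\<Sum>b\<in>W. complex_of_real (y b) * (\<i> * (\<Sum>x\<in>W. complex_of_real (A x b) * ?U t u x)))) (at t)"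
      unfolding \<psi>_def
      by (intro has_vector_derivative_mult_right has_vector_derivative_sum dU_right[OF fin sym u]) 
    moreover have "\<i> * (\<Sum>b\<in>W. complex_of_real (y b) * (\<i> * (\<Sum>x\<in>W. complex_of_real (A x b) * ?U t u x))) = - h t"
    proof -
      have "\<i> * (\<Sum>b\<in>W. complex_of_real (y b) * (\<i> * (\<Sum>x\<in>W. complex_of_real (A x b) * ?U t u x)))
          = - (\<Sum>b\<in>W. \<Sum>x\<in>W. complex_of_real (A x b * y b) * ?U t u x)"
        by (simp add: sum_distrib_left mult.assoc mult.left_commute sum_negf)
      also have "\<dots> = - (\<Sum>x\<in>W. \<Sum>b\<in>W. complex_of_real (A x b * y b) * ?U t u x)"
        by (subst sum.swap) (rule refl)
      also have "\<dots> = - (\<Sum>x\<in>W. complex_of_real (\<Sum>b\<in>W. A x b * y b) * ?U t u x)"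
        by (simp add: sum_distrib_right of_real_sum)
      also have "\<dots> = - (\<Sum>x\<in>W. (if x = u then ?U t u u else 0))"
        by (intro arg_cong[where f="\<lambda>z. - z"] sum.cong refl) (simp add: y)
      also have "\<dots> = - h t" using u fin by (simp add: h_def)
      finally show ?thesis .
    qed
    ultimately show ?thesis by simp
  qed
  define Y where "Y = (\<Sum>b\<in>W. \<Sum>a\<in>W. \<bar>y b\<bar> * \<bar>y a\<bar>)"
  have bnd: "- Re (\<phi> t) \<le> Y" for t
  proof -
    have "- Re (\<phi> t) \<le> norm (\<phi> t)" using abs_Re_le_cmod[of "\<phi> t"] by linarith
    also have "\<dots> \<le> (\<Sum>b\<in>W. norm (complex_of_real (y b) * V t b))"
      unfolding \<phi>_def by (rule norm_sum)
    also have "\<dots> \<le> (\<Sum>b\<in>W. \<Sum>a\<in>W. \<bar>y b\<bar> * \<bar>y a\<bar>)"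
    proof (rule sum_mono)
      fix b assume b: "b \<in> W"
      have "norm (V t b) \<le> (\<Sum>a\<in>W. norm (complex_of_real (y a) * ?U t a b))"
        unfolding V_def by (rule norm_sum)
      also have "\<dots> \<le> (\<Sum>a\<in>W. \<bar>y a\<bar>)"
      proof (rule sum_mono)
        fix a assume a: "a \<in> W"
        have "norm (?U t a b) \<le> 1" by (rule U_le1[OF fin sym a b])
        then show "norm (complex_of_real (y a) * ?U t a b) \<le> \<bar>y a\<bar>"
          by (simp add: norm_mult mult_left_le)
      qed
      finally have "norm (V t b) \<le> (\<Sum>a\<in>W. \<bar>y a\<bar>)" .
      then have "\<bar>y b\<bar> * norm (V t b) \<le> \<bar>y b\<bar> * (\<Sum>a\<in>W. \<bar>y a\<bar>)" by (intro mult_left_mono) auto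
      then show "norm (complex_of_real (y b) * V t b) \<le> (\<Sum>a\<in>W. \<bar>y b\<bar> * \<bar>y a\<bar>)"
        by (simp add: norm_mult sum_distrib_left)
    qed
    finally show ?thesis unfolding Y_def .
  qed
  have h0: "h 0 = 1" unfolding h_def UU0[OF fin sym] by simp
  have G0: "- Re (\<psi> 0) = 0"
  proof -
    have "(\<Sum>b\<in>W. complex_of_real (y b) * ?U 0 u b) = (\<Sum>b\<in>W. if b = u then complex_of_real (y u) else 0)"
      unfolding UU0[OF fin sym] by (intro sum.cong) auto
    then show ?thesis unfolding \<psi>_def using u fin by simp
  qed
  have d1: "((\<lambda>t. - Re (\<phi> t)) has_real_derivative - Re (\<psi> t)) (at t)" for t
    using DERIV_minus[OF vd_Re[OF d\<phi>]] by simp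
  have d2: "((\<lambda>t. - Re (\<psi> t)) has_real_derivative Re (h t)) (at t)" for t
    using DERIV_minus[OF vd_Re[OF d\<psi>]] by simp
  obtain t where t: "t \<ge> 0" "Re (h t) \<le> 0"
    using no_pos[of "\<lambda>t. - Re (\<phi> t)" "\<lambda>t. - Re (\<psi> t)" "\<lambda>t. Re (h t)" Y, OF d1 d2 G0 bnd]
    by blast
  have cont: "continuous_on {0..t} (\<lambda>t. Re (h t))"
  proof -
    have "continuous_on {0..t} h"
      unfolding h_def by (rule continuous_on_vector_derivative) (rule dU_left[OF fin sym u])
    then show ?thesis by (intro continuous_intros)
  qed
  obtain s where s: "0 \<le> s" "s \<le> t" "Re (h s) = 0"
    using IVT2'[of "\<lambda>t. Re (h t)" t 0 0] t cont h0 by auto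
  have "s \<noteq> 0" using s h0 by auto
  then have spos: "s > 0" using s by simp
  have "Im (h s) = 0"
    unfolding h_def UU_def[OF fin sym]
    by (rule Sr_real[OF odd0 mp_bound[OF fin sym u]])
  then have "h s = 0" using s by (simp add: complex_eq_iff)
  then show ?thesis using spos unfolding h_def UU_trans by blast
qed

lemma analytic_final:
  assumes u: "u \<in> W"
    and y: "\<And>x. x \<in> W \<Longrightarrow> (\<Sum>b\<in>W. A x b * y b) = (if x = u then 1 else 0)"
    and odd0: "\<And>n. odd n \<Longrightarrow> mat_pow W A n u u = 0"
  shows "\<not> sedentary W A u \<and> not_sedentary W A u"
proof -
  obtain s where s: "s > 0" "transition W A s u u = 0" using analytic_zero[OF u y odd0] by blast
  let ?f = "\<lambda>t. norm (transition W A t u u)"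
  have bdd: "bdd_below (?f ` {0<..})" by (rule bdd_belowI[of _ 0]) auto
  have le: "(INF t\<in>{0<..}. ?f t) \<le> 0"
    using cINF_lower[OF bdd, of s] s by simp
  have ge: "(INF t\<in>{0<..}. ?f t) \<ge> 0"
    by (rule cINF_greatest) auto
  have eq: "(INF t\<in>{0<..}. ?f t) = 0" using le ge by simp
  show ?thesis unfolding sedentary_def not_sedentary_def eq by auto
qed

end

lemma inj_imp_solvable:
  fixes W :: "'a set" and A :: "'a \<Rightarrow> 'a \<Rightarrow> real"
  assumes fin: "finite W"
    and inj: "\<And>Z. (\<forall>x\<in>W. (\<Sum>b\<in>W. A x b * Z b) = 0) \<Longrightarrow> \<forall>b\<in>W. Z b = 0"
    and u: "u \<in> W"
  shows "\<exists>y. \<forall>x\<in>W. (\<Sum>b\<in>W. A x b * y b) = (if x = u then 1 else 0)"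
proof -
  obtain xs where xs: "set xs = W" "distinct xs" using finite_distinct_list[OF fin] by blast
  define n where "n = length xs"
  have bij: "bij_betw ((!) xs) {..<n} W" using bij_betw_nth[OF xs(2)] xs(1) n_def by simp
  define idx where "idx = the_inv_into {..<n} ((!) xs)"
  have idx1: "idx (xs ! j) = j" if "j < n" for j
    unfolding idx_def using bij that by (auto intro: the_inv_into_f_f simp: bij_betw_def)
  have idx2: "idx b < n" "xs ! (idx b) = b" if bW: "b \<in> W" for b
  proof -
    obtain j where j: "j < n" "b = xs ! j" using bW xs n_def by (auto simp: in_set_conv_nth)
    then show "idx b < n" "xs ! (idx b) = b" using idx1 by auto
  qed
  have reidx: "(\<Sum>b\<in>W. f b) = (\<Sum>j\<in>{0..<n}. f (xs ! j))" for f :: "'a \<Rightarrow> real"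
    using sum.reindex_bij_betw[OF bij, of f] by (simp add: atLeast0LessThan)
  define M where "M = mat n n (\<lambda>(i,j). A (xs ! i) (xs ! j))"
  have M: "M \<in> carrier_mat n n" unfolding M_def by simp
  have "det M \<noteq> 0"
  proof
    assume "det M = 0"
    then obtain v where v: "v \<in> carrier_vec n" "v \<noteq> 0\<^sub>v n" "M *\<^sub>v v = 0\<^sub>v n"
      using det_0_iff_vec_prod_zero[OF M] by blast
    define Z where "Z b = vec_index v (idx b)" for b
    have "\<forall>x\<in>W. (\<Sum>b\<in>W. A x b * Z b) = 0"
    proof
      fix x assume x: "x \<in> W"
      have "(\<Sum>b\<in>W. A x b * Z b) = (\<Sum>j\<in>{0..<n}. A x (xs ! j) * vec_index v j)"
        unfolding reidx Z_def by (intro sum.cong) (auto simp: idx1)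
      also have "\<dots> = vec_index (M *\<^sub>v v) (idx x)"
        using v(1) idx2[OF x] unfolding M_def by (simp add: scalar_prod_def)
      also have "\<dots> = 0" using v(3) idx2[OF x] by simp
      finally show "(\<Sum>b\<in>W. A x b * Z b) = 0" .
    qed
    then have Z0: "\<forall>b\<in>W. Z b = 0" by (rule inj)
    have "v = 0\<^sub>v n"
    proof (rule eq_vecI)
      fix j assume "j < dim_vec (0\<^sub>v n :: real vec)"
      then have j: "j < n" by simp
      have "xs ! j \<in> W" using j xs n_def by auto
      then have "vec_index v (idx (xs ! j)) = 0" using Z0 unfolding Z_def by blast
      then show "vec_index v j = vec_index (0\<^sub>v n) j" using j by (simp add: idx1)
    qed (use v in auto)
    then show False using v by simp
  qed
  then have "M \<in> Units (ring_mat TYPE(real) n ())" by (rule det_non_zero_imp_unit[OF M])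
  then obtain B where B: "B \<in> carrier_mat n n" "M * B = 1\<^sub>m n"
    unfolding Units_def ring_mat_simps by auto
  define y where "y b = B $$ (idx b, idx u)" for b
  show ?thesis
  proof (intro exI ballI)
    fix x assume x: "x \<in> W"
    have "(\<Sum>b\<in>W. A x b * y b) = (\<Sum>j\<in>{0..<n}. A x (xs ! j) * B $$ (j, idx u))"
      unfolding reidx y_def by (intro sum.cong) (auto simp: idx1)
    also have "\<dots> = (M * B) $$ (idx x, idx u)"
      using B(1) idx2[OF x] idx2[OF u] unfolding M_def by (simp add: scalar_prod_def)
    also have "\<dots> = (if idx x = idx u then 1 else 0)"
      unfolding B(2) using idx2[OF x] idx2[OF u] by simp
    also have "\<dots> = (if x = u then 1 else 0)"
    proof -
      have "(idx x = idx u) = (x = u)" using idx2[OF x] idx2[OF u] by metis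
      then show ?thesis by simp
    qed
    finally show "(\<Sum>b\<in>W. A x b * y b) = (if x = u then 1 else 0)" .
  qed
qed

context fixes V :: "'v set" and w :: "'v \<Rightarrow> 'v \<Rightarrow> real"
  assumes wg: "wgraph V w"
begin

lemma finV: "finite V" using wg unfolding wgraph_def by simp
lemma wsym: "w a b = w b a" using wg unfolding wgraph_def by simp
lemma wdiag: "w a a = 0" using wg unfolding wgraph_def by simp
lemma wV: "w a b \<noteq> 0 \<Longrightarrow> a \<in> V \<and> b \<in> V" using wg unfolding wgraph_def by blast
lemma wneq: "w a b \<noteq> 0 \<Longrightarrow> a \<noteq> b" using wdiag by auto

lemma edges_iff: "e \<in> edges V w \<longleftrightarrow> (\<exists>a b. e = {a, b} \<and> w a b \<noteq> 0)"
  unfolding edges_def using wV by blast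

lemma edge_pair: "{a, b} \<in> edges V w \<longleftrightarrow> w a b \<noteq> 0"
proof
  assume "{a, b} \<in> edges V w"
  then obtain c d where "{a, b} = {c, d}" "w c d \<noteq> 0" using edges_iff by blast
  then show "w a b \<noteq> 0" using wsym by (auto simp: doubleton_eq_iff)
qed (auto simp: edges_iff)

lemma finite_edges: "finite (edges V w)"
proof -
  have "edges V w \<subseteq> (\<lambda>(a, b). {a, b}) ` (V \<times> V)" unfolding edges_def by auto
  then show ?thesis by (rule finite_subset) (use finV in auto)
qed

lemma ewt: "w a b \<noteq> 0 \<Longrightarrow> (\<Sum>x\<in>{a, b} - {a}. w a x) = w a b"
proof -
  assume "w a b \<noteq> 0"
  then have "{a, b} - {a} = {b}" using wneq by auto
  then show ?thesis by simp
qed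

lemma sw_Inl_Inr: "w a b \<noteq> 0 \<Longrightarrow> subdiv_weight V w (Inl a) (Inr {a, b}) = w a b"
  using ewt edge_pair by simp

lemma sw_sym: "subdiv_weight V w x y = subdiv_weight V w y x"
  by (cases x; cases y) auto

lemma finW: "finite (subdiv_verts V w)"
  unfolding subdiv_verts_def using finV finite_edges by simp

lemma sumW: "(\<Sum>y\<in>subdiv_verts V w. g y) = (\<Sum>v\<in>V. g (Inl v)) + (\<Sum>e\<in>edges V w. g (Inr e))"
  unfolding subdiv_verts_def
  by (subst sum.union_disjoint) (auto simp: finV finite_edges sum.reindex)

lemma row_Inl: "(\<Sum>y\<in>subdiv_verts V w. subdiv_weight V w (Inl v) y * Z y)
   = (\<Sum>e\<in>edges V w. subdiv_weight V w (Inl v) (Inr e) * Z (Inr e))"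
  unfolding sumW by simp

lemma row_Inr:
  assumes "w a b \<noteq> 0"
  shows "(\<Sum>y\<in>subdiv_verts V w. subdiv_weight V w (Inr {a, b}) y * Z y)
   = w a b * (Z (Inl a) + Z (Inl b))"
proof -
  have ab: "a \<noteq> b" "a \<in> V" "b \<in> V" using assms wneq wV by auto
  have e: "{a, b} \<in> edges V w" using assms edge_pair by simp
  have "(\<Sum>v\<in>V. subdiv_weight V w (Inr {a, b}) (Inl v) * Z (Inl v))
      = (\<Sum>v\<in>{a, b}. subdiv_weight V w (Inr {a, b}) (Inl v) * Z (Inl v))"
    using ab e by (intro sum.mono_neutral_right) (auto simp: finV)
  also have "\<dots> = w a b * Z (Inl a) + w b a * Z (Inl b)"
  proof -
    have "subdiv_weight V w (Inr {a, b}) (Inl a) = w a b"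
      using sw_Inl_Inr[OF assms] sw_sym by metis
    moreover have "subdiv_weight V w (Inr {a, b}) (Inl b) = w b a"
      using sw_Inl_Inr[of b a] assms wsym sw_sym by (metis insert_commute)
    ultimately show ?thesis using ab by simp
  qed
  finally show ?thesis unfolding sumW using wsym by (simp add: algebra_simps)
qed

lemma nonsing_ker:
  assumes ns: "nonsingular W A" and Z: "\<forall>x\<in>W. (\<Sum>y\<in>W. A x y * Z y) = 0" and fin: "finite W"
  shows "\<forall>x\<in>W. Z x = 0"
proof
  fix u assume u: "u \<in> W"
  obtain B where B: "\<forall>u\<in>W. \<forall>v\<in>W. (\<Sum>x\<in>W. B u x * A x v) = (if u = v then 1 else 0)"
    using ns unfolding nonsingular_def by blast
  have "(\<Sum>v\<in>W. (if u = v then 1 else 0) * Z v) = (\<Sum>v\<in>W. if u = v then Z v else 0)"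
    by (rule sum.cong) auto
  then have "Z u = (\<Sum>v\<in>W. (if u = v then 1 else 0) * Z v)" using u fin by simp
  also have "\<dots> = (\<Sum>v\<in>W. (\<Sum>x\<in>W. B u x * A x v) * Z v)" using B u by simp
  also have "\<dots> = (\<Sum>v\<in>W. \<Sum>x\<in>W. B u x * A x v * Z v)"
    by (simp add: sum_distrib_right)
  also have "\<dots> = (\<Sum>x\<in>W. \<Sum>v\<in>W. B u x * A x v * Z v)"
    by (rule sum.swap)
  also have "\<dots> = (\<Sum>x\<in>W. B u x * (\<Sum>v\<in>W. A x v * Z v))"
    by (simp add: sum_distrib_left mult.assoc)
  also have "\<dots> = 0" using Z by simp
  finally show "Z u = 0" .
qed

lemma conn_abs:
  fixes z :: "'v \<Rightarrow> real"
  assumes z: "\<And>a b. w a b \<noteq> 0 \<Longrightarrow> z a = - z b"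
    and r: "(u, v) \<in> {(a, b). w a b \<noteq> 0}\<^sup>*"
  shows "\<bar>z u\<bar> = \<bar>z v\<bar>"
  using r
proof (induction rule: rtrancl_induct)
  case (step y x)
  then have "z y = - z x" using z by simp
  then show ?case using step by simp
qed simp

end

definition cw :: "'v set \<Rightarrow> ('v \<Rightarrow> 'v \<Rightarrow> real) \<Rightarrow> 'v list \<Rightarrow> bool" where
  "cw V w C \<longleftrightarrow> C \<noteq> [] \<and> set C \<subseteq> V \<and> (\<forall>i<length C. w (C ! i) (C ! ((i + 1) mod length C)) \<noteq> 0)"

lemma is_cycle_cw: "is_cycle V w cs \<longleftrightarrow> cw V w cs \<and> distinct cs \<and> length cs \<ge> 3"
  unfolding is_cycle_def cw_def by auto

lemma cw_intro:
  assumes "C \<noteq> []" "set C \<subseteq> V" "\<And>i. Suc i < length C \<Longrightarrow> w (C ! i) (C ! Suc i) \<noteq> 0"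
    "w (last C) (hd C) \<noteq> 0"
  shows "cw V w C"
  unfolding cw_def
proof (intro conjI allI impI)
  fix i assume i: "i < length C"
  show "w (C ! i) (C ! ((i + 1) mod length C)) \<noteq> 0"
  proof (cases "Suc i < length C")
    case True then show ?thesis using assms(3) by simp
  next
    case False
    then have "i = length C - 1" using i by simp
    then show ?thesis using assms(1,4) by (simp add: last_conv_nth hd_conv_nth)
  qed
qed (use assms in auto)

lemma cw_step: "cw V w C \<Longrightarrow> Suc i < length C \<Longrightarrow> w (C ! i) (C ! Suc i) \<noteq> 0"
  unfolding cw_def by (metis Suc_eq_plus1 Suc_lessD mod_less)

lemma cw_wrap: "cw V w C \<Longrightarrow> w (last C) (hd C) \<noteq> 0"
proof -
  assume c: "cw V w C"
  then have ne: "C \<noteq> []" unfolding cw_def by simp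
  then have "length C - 1 < length C" by simp
  with c have "w (C ! (length C - 1)) (C ! ((length C - 1 + 1) mod length C)) \<noteq> 0"
    unfolding cw_def by blast
  then show ?thesis using ne by (simp add: last_conv_nth hd_conv_nth)
qed

lemma cw_rotate: "cw V w C \<Longrightarrow> cw V w (rotate k C)"
  unfolding cw_def
proof (elim conjE, intro conjI allI impI)
  assume ne: "C \<noteq> []" and s: "set C \<subseteq> V" and a: "\<forall>i<length C. w (C ! i) (C ! ((i + 1) mod length C)) \<noteq> 0"
  fix i assume i: "i < length (rotate k C)"
  let ?n = "length C"
  have n: "?n > 0" using ne by simp
  have i': "i < ?n" using i by simp
  have 1: "rotate k C ! i = C ! ((i + k) mod ?n)" using i' by (simp add: nth_rotate add.commute)
  have 2: "rotate k C ! ((i + 1) mod length (rotate k C)) = C ! (((i + 1) mod ?n + k) mod ?n)"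
    using n by (simp add: nth_rotate add.commute)
  have 3: "((i + 1) mod ?n + k) mod ?n = ((i + k) mod ?n + 1) mod ?n"
    by (simp add: mod_simps)
  show "w (rotate k C ! i) (rotate k C ! ((i + 1) mod length (rotate k C))) \<noteq> 0"
    unfolding 1 2 3 using a n by simp
qed (auto)

lemma is_cycle_rotate: "is_cycle V w C \<Longrightarrow> is_cycle V w (rotate k C)"
  unfolding is_cycle_cw using cw_rotate by auto

lemma unique_cycle:
  assumes "unicyclic V w" "is_cycle V w c1" "is_cycle V w c2"
  shows "cycle_edges c1 = cycle_edges c2"
proof -
  have "card {cycle_edges cs | cs. is_cycle V w cs} = 1" using assms(1) unfolding unicyclic_def by simp
  then obtain x where x: "{cycle_edges cs | cs. is_cycle V w cs} = {x}" using card_1_singletonE by blast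
  have "cycle_edges c1 \<in> {x}" "cycle_edges c2 \<in> {x}" using assms(2,3) x[symmetric] by auto
  then show ?thesis by simp
qed

lemma cycle_edge_in: "i < length cs \<Longrightarrow> {cs ! i, cs ! ((i + 1) mod length cs)} \<in> cycle_edges cs"
  unfolding cycle_edges_def by blast

lemma cycle_edges_sub: "e \<in> cycle_edges cs \<Longrightarrow> e \<subseteq> set cs"
proof -
  assume "e \<in> cycle_edges cs"
  then obtain i where i: "i < length cs" "e = {cs ! i, cs ! ((i + 1) mod length cs)}"
    unfolding cycle_edges_def by blast
  then have "(i + 1) mod length cs < length cs" using i(1) by (intro mod_less_divisor) linarith
  then show ?thesis using i by (auto intro!: nth_mem)
qed

lemma cycle_edges_rotate: "cycle_edges (rotate k D) \<subseteq> cycle_edges D"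
proof
  fix e assume "e \<in> cycle_edges (rotate k D)"
  then obtain i where i: "i < length D" "e = {rotate k D ! i, rotate k D ! ((i + 1) mod length D)}"
    unfolding cycle_edges_def by auto
  let ?n = "length D"
  have n: "?n > 0" using i by linarith
  have 1: "rotate k D ! i = D ! ((i + k) mod ?n)" using i by (simp add: nth_rotate add.commute)
  have 2: "rotate k D ! ((i + 1) mod ?n) = D ! (((i + 1) mod ?n + k) mod ?n)"
    using n by (simp add: nth_rotate add.commute)
  have 3: "((i + 1) mod ?n + k) mod ?n = ((i + k) mod ?n + 1) mod ?n"
    by (simp add: mod_simps)
  have "(i + k) mod ?n < ?n" using n by simp
  then show "e \<in> cycle_edges D" unfolding i(2) 1 2 3 by (rule cycle_edge_in)
qed

context fixes V :: "'v set" and w :: "'v \<Rightarrow> 'v \<Rightarrow> real"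
  assumes wg: "wgraph V w"
begin

lemma cycle_edge_w:
  assumes cyc: "is_cycle V w cs" and e: "e \<in> cycle_edges cs" and ab: "e = {a, b}" "a \<noteq> b"
  shows "w a b \<noteq> 0"
proof -
  obtain i where i: "i < length cs" "e = {cs ! i, cs ! ((i + 1) mod length cs)}"
    using e unfolding cycle_edges_def by auto
  have "w (cs ! i) (cs ! ((i + 1) mod length cs)) \<noteq> 0" using cyc i unfolding is_cycle_def by blast
  then show ?thesis using i ab wsym[OF wg] by (auto simp: doubleton_eq_iff)
qed

lemma cycle_edges_sub_edges:
  assumes cyc: "is_cycle V w cs"
  shows "cycle_edges cs \<subseteq> edges V w"
proof
  fix e assume e: "e \<in> cycle_edges cs"
  then obtain i where i: "i < length cs" "e = {cs ! i, cs ! ((i + 1) mod length cs)}"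
    unfolding cycle_edges_def by auto
  have "w (cs ! i) (cs ! ((i + 1) mod length cs)) \<noteq> 0" using cyc i unfolding is_cycle_def by blast
  then show "e \<in> edges V w" using i edges_iff[OF wg] by blast
qed

lemma cyc_wgraph:
  assumes cyc: "is_cycle V w cs"
  shows "wgraph (set cs) (cycle_weight w cs)"
proof -
  have 1: "cycle_weight w cs u v = cycle_weight w cs v u" for u v
    unfolding cycle_weight_def using wsym[OF wg] by (simp add: insert_commute)
  have 2: "cycle_weight w cs u u = 0" for u unfolding cycle_weight_def using wdiag[OF wg] by simp
  have 3: "u \<in> set cs \<and> v \<in> set cs" if "cycle_weight w cs u v \<noteq> 0" for u v
  proof -
    have "{u, v} \<in> cycle_edges cs" using that unfolding cycle_weight_def by (auto split: if_splits)
    then have "{u, v} \<subseteq> set cs" by (rule cycle_edges_sub)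
    then show ?thesis by simp
  qed
  show ?thesis unfolding wgraph_def using 1 2 3 by blast
qed

lemma cyc_edges:
  assumes cyc: "is_cycle V w cs"
  shows "edges (set cs) (cycle_weight w cs) = cycle_edges cs"
proof
  show "edges (set cs) (cycle_weight w cs) \<subseteq> cycle_edges cs"
    unfolding edges_def cycle_weight_def by (auto split: if_splits)
  show "cycle_edges cs \<subseteq> edges (set cs) (cycle_weight w cs)"
  proof
    fix e assume e: "e \<in> cycle_edges cs"
    then obtain i where i: "i < length cs" "e = {cs ! i, cs ! ((i + 1) mod length cs)}"
      unfolding cycle_edges_def by auto
    have "w (cs ! i) (cs ! ((i + 1) mod length cs)) \<noteq> 0" using cyc i unfolding is_cycle_def by blast
    moreover have "{cs ! i, cs ! ((i + 1) mod length cs)} \<subseteq> set cs" using cycle_edges_sub e i by blast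
    moreover have "cycle_weight w cs (cs ! i) (cs ! ((i + 1) mod length cs)) = w (cs ! i) (cs ! ((i + 1) mod length cs))"
      unfolding cycle_weight_def using e i by simp
    ultimately have "\<exists>u v. e = {u, v} \<and> u \<in> set cs \<and> v \<in> set cs \<and> cycle_weight w cs u v \<noteq> 0"
      using i(2) by (intro exI[of _ "cs ! i"] exI[of _ "cs ! ((i + 1) mod length cs)"]) simp
    then show "e \<in> edges (set cs) (cycle_weight w cs)"
      unfolding edges_def by blast
  qed
qed

lemma cyc_sw:
  assumes cyc: "is_cycle V w cs" and e: "e \<in> cycle_edges cs"
  shows "subdiv_weight (set cs) (cycle_weight w cs) (Inl v) (Inr e) = subdiv_weight V w (Inl v) (Inr e)"
proof -
  have e1: "e \<in> edges (set cs) (cycle_weight w cs)" using cyc_edges[OF cyc] e by simp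
  have e2: "e \<in> edges V w" using cycle_edges_sub_edges[OF cyc] e by auto
  have "(\<Sum>x\<in>e - {v}. cycle_weight w cs v x) = (\<Sum>x\<in>e - {v}. w v x)" if "v \<in> e"
  proof (rule sum.cong)
    fix x assume x: "x \<in> e - {v}"
    have "e \<in> edges V w" by (rule e2)
    then obtain a b where ab: "e = {a, b}" "w a b \<noteq> 0" using edges_iff[OF wg] by blast
    then have "{v, x} = e" using x that by auto
    then show "cycle_weight w cs v x = w v x" unfolding cycle_weight_def using e by simp
  qed simp
  then show ?thesis using e1 e2 by simp
qed

lemma part1_KV:
  fixes z :: "'v \<Rightarrow> real"
  assumes conn: "connected_graph V w" and cyc: "is_cycle V w cs"
    and ns: "nonsingular (subdiv_verts (set cs) (cycle_weight w cs)) (subdiv_weight (set cs) (cycle_weight w cs))"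
    and z: "\<And>a b. w a b \<noteq> 0 \<Longrightarrow> z a = - z b" and v: "v \<in> V"
  shows "z v = 0"
proof -
  let ?Vc = "set cs" and ?wc = "cycle_weight w cs"
  have wgc: "wgraph ?Vc ?wc" by (rule cyc_wgraph[OF cyc])
  define Z where "Z x = (case x of Inl a \<Rightarrow> z a | Inr _ \<Rightarrow> 0)" for x :: "'v + 'v set"
  have "\<forall>x\<in>subdiv_verts ?Vc ?wc. (\<Sum>y\<in>subdiv_verts ?Vc ?wc. subdiv_weight ?Vc ?wc x y * Z y) = 0"
  proof
    fix x assume x: "x \<in> subdiv_verts ?Vc ?wc"
    show "(\<Sum>y\<in>subdiv_verts ?Vc ?wc. subdiv_weight ?Vc ?wc x y * Z y) = 0"
    proof (cases x)
      case (Inl a)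
      then show ?thesis unfolding Inl row_Inl[OF wgc] by (simp add: Z_def)
    next
      case (Inr e)
      then have "e \<in> edges ?Vc ?wc" using x unfolding subdiv_verts_def by auto
      then obtain a b where ab: "e = {a, b}" "?wc a b \<noteq> 0" using edges_iff[OF wgc] by blast
      then have "w a b \<noteq> 0" unfolding cycle_weight_def by (auto split: if_splits)
      then have "z a + z b = 0" using z by simp
      then show ?thesis unfolding Inr ab(1) row_Inr[OF wgc ab(2)] by (simp add: Z_def)
    qed
  qed
  then have Z0: "\<forall>x\<in>subdiv_verts ?Vc ?wc. Z x = 0" by (rule nonsing_ker[OF wg ns _ finW[OF wgc]])
  have "length cs > 0" using cyc unfolding is_cycle_def by auto
  then have c0: "cs ! 0 \<in> set cs" by (rule nth_mem)
  then have "Inl (cs ! 0) \<in> subdiv_verts ?Vc ?wc" unfolding subdiv_verts_def by auto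
  then have z0: "z (cs ! 0) = 0" using Z0 unfolding Z_def by force
  have "cs ! 0 \<in> V" using cyc c0 unfolding is_cycle_def by auto
  then have "(cs ! 0, v) \<in> {(a, b). w a b \<noteq> 0}\<^sup>*" using conn v unfolding connected_graph_def by blast
  then have "\<bar>z (cs ! 0)\<bar> = \<bar>z v\<bar>" using conn_abs[OF wg, of z] z by blast
  then show ?thesis using z0 by simp
qed

end

context fixes V :: "'v set" and w :: "'v \<Rightarrow> 'v \<Rightarrow> real"
  assumes wg: "wgraph V w"
begin

lemma take_cycle:
  assumes d: "distinct P" and s: "set P \<subseteq> V" and j: "2 \<le> j" "j < length P"
    and st: "\<And>i. Suc i < length P \<Longrightarrow> w (P ! i) (P ! Suc i) \<noteq> 0"
    and cl: "w (P ! j) (P ! 0) \<noteq> 0"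
  shows "is_cycle V w (take (Suc j) P)"
  unfolding is_cycle_cw
proof (intro conjI)
  let ?L = "take (Suc j) P"
  have len: "length ?L = Suc j" using j by simp
  show "cw V w ?L"
  proof (rule cw_intro)
    show "?L \<noteq> []" using len by auto
    show "set ?L \<subseteq> V" using s set_take_subset by fast
    show "w (?L ! i) (?L ! Suc i) \<noteq> 0" if "Suc i < length ?L" for i
      using that st j by simp
    have "?L \<noteq> []" using len by auto
    then have "last ?L = ?L ! j" using len by (simp add: last_conv_nth)
    then have "last ?L = P ! j" by simp
    moreover have "hd ?L = P ! 0" using \<open>?L \<noteq> []\<close> by (simp add: hd_conv_nth)
    ultimately show "w (last ?L) (hd ?L) \<noteq> 0" using cl by simp
  qed
  show "distinct ?L" using d by simp
  show "3 \<le> length ?L" using len j by simp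
qed

lemma off_cycle_zero:
  fixes \<zeta> :: "'v set \<Rightarrow> real"
  assumes uni: "unicyclic V w" and cyc: "is_cycle V w D"
    and eq: "\<And>v. v \<in> V \<Longrightarrow> (\<Sum>e\<in>edges V w. subdiv_weight V w (Inl v) (Inr e) * \<zeta> e) = 0"
    and e0: "e0 \<in> edges V w" "e0 \<notin> cycle_edges D"
  shows "\<zeta> e0 = 0"
proof (rule ccontr)
  assume ne: "\<zeta> e0 \<noteq> 0"
  define S where "S = {e \<in> edges V w. \<zeta> e \<noteq> 0 \<and> e \<notin> cycle_edges D}"
  define sadj where "sadj a b \<longleftrightarrow> {a, b} \<in> S" for a b
  have sadj_sym: "sadj a b \<Longrightarrow> sadj b a" for a b unfolding sadj_def by (simp add: insert_commute)
  have sadj_w: "sadj a b \<Longrightarrow> w a b \<noteq> 0" for a b unfolding sadj_def S_def using edge_pair[OF wg] by blast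
  have sadj_V: "sadj a b \<Longrightarrow> a \<in> V \<and> b \<in> V" for a b using sadj_w wV[OF wg] by blast
  have sadj_ne: "sadj a b \<Longrightarrow> a \<noteq> b" for a b using sadj_w wneq[OF wg] by blast
  define path where "path P \<longleftrightarrow> distinct P \<and> 2 \<le> length P \<and> set P \<subseteq> V \<and>
      (\<forall>i. Suc i < length P \<longrightarrow> sadj (P ! i) (P ! Suc i))" for P
  have ex_path: "\<exists>P. path P"
  proof -
    obtain a b where ab: "e0 = {a, b}" "w a b \<noteq> 0" using e0 edges_iff[OF wg] by blast
    then have s: "sadj a b" unfolding sadj_def S_def using e0 ne by simp
    then have "path [a, b]" unfolding path_def using sadj_ne[OF s] sadj_V[OF s]
      by (auto simp: less_Suc_eq)
    then show ?thesis by blast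
  qed
  have fin: "finite {P. path P}"
    by (rule finite_subset[OF _ finite_subset_distinct[OF finV[OF wg]]]) (auto simp: path_def)
  define m where "m = Max (length ` {P. path P})"
  obtain P where P: "path P" "length P = m"
  proof -
    have "m \<in> length ` {P. path P}" unfolding m_def using fin ex_path by (intro Max_in) auto
    then show ?thesis using that by auto
  qed
  have maxP: "path Q \<Longrightarrow> length Q \<le> m" for Q unfolding m_def using fin by (intro Max_ge) auto
  have unique_contra: False if "is_cycle V w L" "{a, b} \<in> cycle_edges L" "sadj a b" for L a b
  proof -
    have "cycle_edges L = cycle_edges D" using unique_cycle[OF uni that(1) cyc] .
    then show False using that(2,3) unfolding sadj_def S_def by auto
  qed
  have endpoint: "hd Q \<in> set D" if Q: "path Q" "length Q = m" for Q
  proof (rule ccontr)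
    assume notD: "hd Q \<notin> set D"
    let ?p = "Q ! 0" and ?q = "Q ! 1"
    have lenQ: "2 \<le> length Q" using Q unfolding path_def by simp
    have "Q \<noteq> []" using lenQ by auto
    then have hdQ: "hd Q = ?p" by (simp add: hd_conv_nth)
    have pq: "sadj ?p ?q" using Q lenQ unfolding path_def by auto
    have only: "x = ?q" if x: "sadj ?p x" for x
    proof (cases "x \<in> set Q")
      case False
      have "path (x # Q)"
        unfolding path_def
      proof (intro conjI allI impI)
        show "distinct (x # Q)" using False Q unfolding path_def by simp
        show "2 \<le> length (x # Q)" using lenQ by simp
        show "set (x # Q) \<subseteq> V" using Q sadj_V[OF x] unfolding path_def by simp
        fix i assume i: "Suc i < length (x # Q)"
        show "sadj ((x # Q) ! i) ((x # Q) ! Suc i)"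
        proof (cases i)
          case 0 then show ?thesis using sadj_sym[OF x] by simp
        next
          case (Suc k) then show ?thesis using Q i unfolding path_def by simp
        qed
      qed
      then have "length (x # Q) \<le> m" by (rule maxP)
      then show ?thesis using Q by simp
    next
      case True
      then obtain j where j: "j < length Q" "x = Q ! j" by (auto simp: in_set_conv_nth)
      have "j \<noteq> 0"
      proof
        assume "j = 0" then show False using sadj_ne[OF x] j by simp
      qed
      show ?thesis
      proof (cases "j = 1")
        case True then show ?thesis using j by simp
      next
        case False
        then have j2: "2 \<le> j" using \<open>j \<noteq> 0\<close> by simp
        have cy: "is_cycle V w (take (Suc j) Q)"
        proof (rule take_cycle[OF _ _ j2 j(1)])
          show "distinct Q" "set Q \<subseteq> V" using Q unfolding path_def by auto
          show "w (Q ! i) (Q ! Suc i) \<noteq> 0" if "Suc i < length Q" for i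
            using Q that sadj_w unfolding path_def by blast
          show "w (Q ! j) (Q ! 0) \<noteq> 0" using sadj_w[OF sadj_sym[OF x]] j by simp
        qed
        have "{take (Suc j) Q ! 0, take (Suc j) Q ! ((0 + 1) mod length (take (Suc j) Q))}
               \<in> cycle_edges (take (Suc j) Q)"
          by (rule cycle_edge_in) (use \<open>Q \<noteq> []\<close> in simp)
        moreover have "(0 + 1) mod length (take (Suc j) Q) = 1" using j j2 by simp
        ultimately have "{?p, ?q} \<in> cycle_edges (take (Suc j) Q)" using j2 by simp
        then show ?thesis using unique_contra[OF cy _ pq] by blast
      qed
    qed
    have pV: "?p \<in> V" using sadj_V[OF pq] by simp
    have pqE: "{?p, ?q} \<in> edges V w" using pq unfolding sadj_def S_def by simp
    have zero: "\<forall>e\<in>edges V w - {{?p, ?q}}. subdiv_weight V w (Inl ?p) (Inr e) * \<zeta> e = 0"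
    proof
      fix e assume "e \<in> edges V w - {{?p, ?q}}"
      then have e: "e \<in> edges V w" "e \<noteq> {?p, ?q}" by auto
      show "subdiv_weight V w (Inl ?p) (Inr e) * \<zeta> e = 0"
      proof (cases "?p \<in> e \<and> \<zeta> e \<noteq> 0")
        case False then show ?thesis by auto
      next
        case True
        obtain a b where ab: "e = {a, b}" "w a b \<noteq> 0" using e edges_iff[OF wg] by blast
        obtain x where x: "e = {?p, x}" using True ab by auto
        have "e \<notin> cycle_edges D"
        proof
          assume "e \<in> cycle_edges D"
          then have "e \<subseteq> set D" by (rule cycle_edges_sub)
          then show False using True notD hdQ by auto
        qed
        then have "sadj ?p x" unfolding sadj_def S_def using x e True by simp
        then have "x = ?q" by (rule only)
        then show ?thesis using e x by simp
      qed
    qed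
    have "(\<Sum>e\<in>edges V w. subdiv_weight V w (Inl ?p) (Inr e) * \<zeta> e)
        = (\<Sum>e\<in>{{?p, ?q}}. subdiv_weight V w (Inl ?p) (Inr e) * \<zeta> e)"
      by (rule sum.mono_neutral_right[OF finite_edges[OF wg]]) (use pqE zero in auto)
    also have "\<dots> = subdiv_weight V w (Inl ?p) (Inr {?p, ?q}) * \<zeta> {?p, ?q}" by simp
    also have "\<dots> \<noteq> 0"
    proof -
      have "subdiv_weight V w (Inl ?p) (Inr {?p, ?q}) = w ?p ?q" using sw_Inl_Inr[OF wg sadj_w[OF pq]] .
      moreover have "\<zeta> {?p, ?q} \<noteq> 0" using pq unfolding sadj_def S_def by simp
      ultimately show ?thesis using sadj_w[OF pq] by simp
    qed
    finally show False using eq[OF pV] by simp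
  qed
  have Pd: "distinct P" and Pl: "2 \<le> length P" and PV: "set P \<subseteq> V"
    and Ps: "\<And>i. Suc i < length P \<Longrightarrow> sadj (P ! i) (P ! Suc i)" using P unfolding path_def by auto
  have Pne: "P \<noteq> []" using Pl by auto
  have hdD: "P ! 0 \<in> set D" using endpoint[OF P] Pne by (simp add: hd_conv_nth)
  have "path (rev P)"
    unfolding path_def
  proof (intro conjI allI impI)
    fix i assume i: "Suc i < length (rev P)"
    have "sadj (P ! (length P - Suc (Suc i))) (P ! Suc (length P - Suc (Suc i)))"
      using Ps i by simp
    moreover have "Suc (length P - Suc (Suc i)) = length P - Suc i" using i by simp
    ultimately show "sadj (rev P ! i) (rev P ! Suc i)" using i by (simp add: rev_nth sadj_sym)
  qed (use Pd Pl PV in auto)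
  then have "hd (rev P) \<in> set D" using endpoint P by simp
  then have lastD: "P ! (length P - 1) \<in> set D" using Pne by (simp add: hd_rev last_conv_nth)
  define j where "j = (LEAST i. 0 < i \<and> i < length P \<and> P ! i \<in> set D)"
  have jex: "0 < length P - 1 \<and> length P - 1 < length P \<and> P ! (length P - 1) \<in> set D"
    using Pl lastD by auto
  have j: "0 < j" "j < length P" "P ! j \<in> set D" using LeastI_ex[of "\<lambda>i. 0 < i \<and> i < length P \<and> P ! i \<in> set D"] jex
    unfolding j_def by blast+
  have jmin: "P ! i \<notin> set D" if "0 < i" "i < j" for i
    using not_less_Least[of i "\<lambda>i. 0 < i \<and> i < length P \<and> P ! i \<in> set D"] that j(2)
    unfolding j_def[symmetric] by auto
  obtain a where a: "a < length D" "D ! a = P ! 0" using hdD by (auto simp: in_set_conv_nth)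
  define D' where "D' = rotate a D"
  have cycD': "is_cycle V w D'" unfolding D'_def by (rule is_cycle_rotate[OF cyc])
  have cwD': "cw V w D'" using cycD' is_cycle_cw by auto
  have lenD': "length D' = length D" unfolding D'_def by simp
  have "0 < length D" using a(1) by linarith
  then have D'0: "D' ! 0 = P ! 0" unfolding D'_def using a by (simp add: nth_rotate)
  have dD': "distinct D'" using cycD' unfolding is_cycle_def by simp
  have setD': "set D' = set D" unfolding D'_def by simp
  have m3: "3 \<le> length D" using cyc unfolding is_cycle_def by simp
  have D'pos: "0 < length D'" using m3 lenD' by linarith
  obtain c where c: "c < length D" "D' ! c = P ! j" using j(3) setD' lenD' by (metis in_set_conv_nth)
  have c0: "c \<noteq> 0"
  proof
    assume "c = 0"
    then have "P ! j = P ! 0" using c D'0 by simp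
    moreover have "0 < length P" using j(2) by linarith
    ultimately show False using j nth_eq_iff_index_eq[OF Pd, of j 0] by simp
  qed
  define Q where "Q = take (Suc j) P"
  define R where "R = drop (Suc c) D'"
  define L where "L = Q @ R"
  have lenQ: "length Q = Suc j" unfolding Q_def using j by simp
  have lenR: "length R = length D - Suc c" unfolding R_def using lenD' by simp
  have Qi: "Q ! i = P ! i" if "i \<le> j" for i unfolding Q_def using that by simp
  have Ri: "R ! i = D' ! (Suc c + i)" if "i < length R" for i
    unfolding R_def using that lenR c lenD' by simp
  have edgeD: "{P ! 0, P ! 1} \<notin> cycle_edges D"
    using Ps[of 0] Pl unfolding sadj_def S_def by auto
  have lenL3: "3 \<le> length L"
  proof (rule ccontr)
    assume "\<not> 3 \<le> length L"
    then have jc: "j = 1" "c = length D - 1" using lenQ lenR j c c0 unfolding L_def by auto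
    have "{D' ! (length D - 1), D' ! ((length D - 1 + 1) mod length D')} \<in> cycle_edges D'"
      using m3 lenD' by (intro cycle_edge_in) simp
    moreover have "length D - 1 + 1 = length D" using m3 by linarith
    then have "(length D - 1 + 1) mod length D' = 0" using lenD' by simp
    ultimately have "{D' ! (length D - 1), D' ! 0} \<in> cycle_edges D'" by simp
    then have "{P ! 1, P ! 0} \<in> cycle_edges D'" using c jc D'0 by simp
    then have "{P ! 0, P ! 1} \<in> cycle_edges D"
      using cycle_edges_rotate[of a D] unfolding D'_def by (auto simp: insert_commute)
    then show False using edgeD by simp
  qed
  have cycL: "is_cycle V w L"
    unfolding is_cycle_cw
  proof (intro conjI)
    show "3 \<le> length L" by (rule lenL3)
    show "distinct L"
      unfolding L_def distinct_append
    proof (intro conjI)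
      show "distinct Q" unfolding Q_def using Pd by simp
      show "distinct R" unfolding R_def using dD' by simp
      show "set Q \<inter> set R = {}"
      proof (rule ccontr)
        assume "set Q \<inter> set R \<noteq> {}"
        then obtain x where xQ: "x \<in> set Q" and xR: "x \<in> set R" by auto
        obtain i where i: "i < length R" "x = R ! i" using xR by (auto simp: in_set_conv_nth)
        have xD: "x = D' ! (Suc c + i)" "Suc c + i < length D'" using Ri i lenR lenD' by auto
        obtain k where k: "k < length Q" "x = Q ! k" using xQ by (auto simp: in_set_conv_nth)
        have xk: "x = P ! k" "k \<le> j" using k lenQ Qi by auto
        have "x \<in> set D" using xD setD' nth_mem by metis
        then have "k = 0 \<or> k = j" using jmin xk by (metis less_le not_gr_zero)
        then show False
        proof
          assume "k = 0"
          then have "D' ! (Suc c + i) = D' ! 0" using xD xk D'0 by simp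
          then show False using nth_eq_iff_index_eq[OF dD', of "Suc c + i" 0] xD D'pos by simp
        next
          assume "k = j"
          then have "D' ! (Suc c + i) = D' ! c" using xD xk c by simp
          then show False using nth_eq_iff_index_eq[OF dD', of "Suc c + i" c] xD c lenD' by simp
        qed
      qed
    qed
    show "cw V w L"
    proof (rule cw_intro)
      show "L \<noteq> []" unfolding L_def using lenQ by auto
      have "set Q \<subseteq> V" unfolding Q_def using PV set_take_subset by fast
      moreover have "set R \<subseteq> V"
      proof -
        have "set R \<subseteq> set D'" unfolding R_def by (rule set_drop_subset)
        moreover have "set D' \<subseteq> V" using cycD' unfolding is_cycle_def by simp
        ultimately show ?thesis by blast
      qed
      ultimately show "set L \<subseteq> V" unfolding L_def by simp
      fix i assume i: "Suc i < length L"
      show "w (L ! i) (L ! Suc i) \<noteq> 0"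
      proof (cases "Suc i \<le> j")
        case True
        then have "i < length Q" "Suc i < length Q" using lenQ by auto
        then have "L ! i = Q ! i" "L ! Suc i = Q ! Suc i" unfolding L_def by (simp_all add: nth_append)
        moreover have "Q ! i = P ! i" "Q ! Suc i = P ! Suc i" using Qi True by auto
        moreover have "Suc i < length P" using True j(2) by linarith
        ultimately show ?thesis using Ps[of i] sadj_w by auto
      next
        case False
        then have ij: "j \<le> i" by simp
        have "Suc i < Suc j + length R" using i lenQ unfolding L_def by simp
        then have Rlen: "i - j < length R" using ij by linarith
        have "\<not> Suc i < length Q" "Suc i - length Q = i - j" using lenQ ij False by auto
        then have "L ! Suc i = R ! (i - j)" unfolding L_def by (simp add: nth_append)
        also have "\<dots> = D' ! (Suc c + (i - j))" by (rule Ri[OF Rlen])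
        finally have 2: "L ! Suc i = D' ! (Suc (c + (i - j)))" by simp
        have 1: "L ! i = D' ! (c + (i - j))"
        proof (cases "i = j")
          case True
          then have "i < length Q" using lenQ by simp
          then have "L ! i = Q ! j" unfolding L_def using True by (simp add: nth_append)
          then show ?thesis using Qi[of j] c True by simp
        next
          case False
          then have "\<not> i < length Q" "i - length Q = i - Suc j" "i - Suc j < length R"
            using Rlen ij lenQ by auto
          then have "L ! i = R ! (i - Suc j)" unfolding L_def by (simp add: nth_append)
          also have "\<dots> = D' ! (Suc c + (i - Suc j))" by (rule Ri) fact
          also have "Suc c + (i - Suc j) = c + (i - j)" using False ij by linarith
          finally show ?thesis .
        qed
        have "Suc (c + (i - j)) < length D'" using Rlen lenR lenD' by linarith
        then show ?thesis unfolding 1 2 using cw_step[OF cwD'] by blast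
      qed
    next
      have Qne: "Q \<noteq> []" using lenQ by auto
      have "hd L = hd Q" unfolding L_def using Qne by simp
      also have "\<dots> = Q ! 0" using Qne by (simp add: hd_conv_nth)
      also have "\<dots> = D' ! 0" using Qi[of 0] D'0 by simp
      finally have hdL: "hd L = D' ! 0" .
      have lastL: "last L = D' ! (length D' - 1)"
      proof (cases "R = []")
        case True
        then have "c = length D - 1" using lenR c by simp
        moreover have "last L = last Q" unfolding L_def using True by simp
        moreover have "last Q = Q ! j" using Qne lenQ by (simp add: last_conv_nth)
        ultimately show ?thesis using Qi[of j] c lenD' by simp
      next
        case False
        then have "last L = last R" unfolding L_def by simp
        also have "\<dots> = last D'" unfolding R_def using False unfolding R_def by (simp add: last_drop)
        also have "\<dots> = D' ! (length D' - 1)" using D'pos by (simp add: last_conv_nth)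
        finally show ?thesis .
      qed
      have "w (last D') (hd D') \<noteq> 0" by (rule cw_wrap[OF cwD'])
      moreover have "D' \<noteq> []" using D'pos by auto
      ultimately show "w (last L) (hd L) \<noteq> 0" using hdL lastL by (simp add: last_conv_nth hd_conv_nth)
    qed
  qed
  have "{L ! 0, L ! ((0 + 1) mod length L)} \<in> cycle_edges L" using lenL3 by (intro cycle_edge_in) linarith
  moreover have "(0 + 1) mod length L = 1" using lenL3 by simp
  moreover have "L ! 0 = P ! 0" "L ! 1 = P ! 1"
  proof -
    have "0 < length Q" "1 < length Q" using lenQ j(1) by auto
    then have "L ! 0 = Q ! 0" "L ! 1 = Q ! 1" unfolding L_def by (simp_all add: nth_append)
    then show "L ! 0 = P ! 0" "L ! 1 = P ! 1" using Qi[of 0] Qi[of 1] j(1) by auto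
  qed
  ultimately have "{P ! 0, P ! 1} \<in> cycle_edges L" by simp
  then show False using unique_contra[OF cycL _ Ps[of 0]] Pl by simp
qed

end

context fixes V :: "'v set" and w :: "'v \<Rightarrow> 'v \<Rightarrow> real"
  assumes wg: "wgraph V w"
begin

lemma part1_KE:
  fixes \<zeta> :: "'v set \<Rightarrow> real"
  assumes uni: "unicyclic V w" and cyc: "is_cycle V w cs"
    and ns: "nonsingular (subdiv_verts (set cs) (cycle_weight w cs)) (subdiv_weight (set cs) (cycle_weight w cs))"
    and eq: "\<And>v. v \<in> V \<Longrightarrow> (\<Sum>e\<in>edges V w. subdiv_weight V w (Inl v) (Inr e) * \<zeta> e) = 0"
    and e: "e \<in> edges V w"
  shows "\<zeta> e = 0"
proof -
  let ?Vc = "set cs" and ?wc = "cycle_weight w cs"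
  have wgc: "wgraph ?Vc ?wc" by (rule cyc_wgraph[OF wg cyc])
  have off: "\<zeta> e' = 0" if "e' \<in> edges V w" "e' \<notin> cycle_edges cs" for e'
    using off_cycle_zero[OF wg uni cyc eq that] .
  define Z where "Z x = (case x of Inl a \<Rightarrow> 0 | Inr e \<Rightarrow> \<zeta> e)" for x :: "'v + 'v set"
  have "\<forall>x\<in>subdiv_verts ?Vc ?wc. (\<Sum>y\<in>subdiv_verts ?Vc ?wc. subdiv_weight ?Vc ?wc x y * Z y) = 0"
  proof
    fix x assume x: "x \<in> subdiv_verts ?Vc ?wc"
    show "(\<Sum>y\<in>subdiv_verts ?Vc ?wc. subdiv_weight ?Vc ?wc x y * Z y) = 0"
    proof (cases x)
      case (Inl a)
      then have aV: "a \<in> V" using x cyc unfolding subdiv_verts_def is_cycle_def by auto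
      have "(\<Sum>y\<in>subdiv_verts ?Vc ?wc. subdiv_weight ?Vc ?wc x y * Z y)
          = (\<Sum>e\<in>edges ?Vc ?wc. subdiv_weight ?Vc ?wc (Inl a) (Inr e) * \<zeta> e)"
        unfolding Inl row_Inl[OF wgc] by (simp add: Z_def)
      also have "\<dots> = (\<Sum>e\<in>cycle_edges cs. subdiv_weight V w (Inl a) (Inr e) * \<zeta> e)"
        unfolding cyc_edges[OF wg cyc] by (rule sum.cong[OF refl]) (metis cyc_sw[OF wg cyc])
      also have "\<dots> = (\<Sum>e\<in>edges V w. subdiv_weight V w (Inl a) (Inr e) * \<zeta> e)"
        by (rule sum.mono_neutral_left[OF finite_edges[OF wg] cycle_edges_sub_edges[OF wg cyc]])
          (use off in auto)
      also have "\<dots> = 0" by (rule eq[OF aV])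
      finally show ?thesis .
    next
      case (Inr e)
      then have "e \<in> edges ?Vc ?wc" using x unfolding subdiv_verts_def by auto
      then obtain a b where ab: "e = {a, b}" "?wc a b \<noteq> 0" using edges_iff[OF wgc] by blast
      then show ?thesis unfolding Inr ab(1) row_Inr[OF wgc ab(2)] by (simp add: Z_def)
    qed
  qed
  then have Z0: "\<forall>x\<in>subdiv_verts ?Vc ?wc. Z x = 0" by (rule nonsing_ker[OF wg ns _ finW[OF wgc]])
  show ?thesis
  proof (cases "e \<in> cycle_edges cs")
    case True
    then have "Inr e \<in> subdiv_verts ?Vc ?wc" unfolding subdiv_verts_def cyc_edges[OF wg cyc] by auto
    then show ?thesis using Z0 unfolding Z_def by force
  next
    case False then show ?thesis using off e by blast
  qed
qed

lemma odd_cycle_KE: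
  fixes \<zeta> :: "'v set \<Rightarrow> real"
  assumes cyc: "is_cycle V w D" and oddD: "odd (length D)"
    and eq: "\<And>v. v \<in> V \<Longrightarrow> (\<Sum>e\<in>edges V w. subdiv_weight V w (Inl v) (Inr e) * \<zeta> e) = 0"
    and off: "\<And>e. e \<in> edges V w \<Longrightarrow> e \<notin> cycle_edges D \<Longrightarrow> \<zeta> e = 0"
    and e: "e \<in> cycle_edges D"
  shows "\<zeta> e = 0"
proof -
  define p where "p = length D"
  have p3: "3 \<le> p" using cyc unfolding is_cycle_def p_def by simp
  have dD: "distinct D" using cyc unfolding is_cycle_def by simp
  have DV: "set D \<subseteq> V" using cyc unfolding is_cycle_def by simp
  define nx where "nx i = (i + 1) mod p" for i
  define pv where "pv i = (if i = 0 then p - 1 else i - 1)" for i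
  define E where "E i = {D ! i, D ! nx i}" for i
  define q where "q i = w (D ! i) (D ! nx i) * \<zeta> (E i)" for i
  have nx_lt: "nx i < p" for i unfolding nx_def using p3 by simp
  have pv_lt: "i < p \<Longrightarrow> pv i < p" for i unfolding pv_def by auto
  have nx_pv: "i < p \<Longrightarrow> nx (pv i) = i" for i unfolding nx_def pv_def using p3 by auto
  have nx_eq: "k < p \<Longrightarrow> nx k = i \<Longrightarrow> i < p \<Longrightarrow> k = pv i" for k i
    unfolding nx_def pv_def using p3
    by (cases "k + 1 < p") (auto simp: mod_if split: if_splits)
  have inj: "i < p \<Longrightarrow> j < p \<Longrightarrow> D ! i = D ! j \<Longrightarrow> i = j" for i j
    using nth_eq_iff_index_eq[OF dD] p_def by auto
  have wE: "w (D ! i) (D ! nx i) \<noteq> 0" if "i < p" for i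
    using cyc that unfolding is_cycle_def nx_def p_def by auto
  have Ecyc: "E i \<in> cycle_edges D" if "i < p" for i
    unfolding E_def nx_def p_def using cycle_edge_in that p_def by blast
  have Eedge: "E i \<in> edges V w" if "i < p" for i
    using cycle_edges_sub_edges[OF wg cyc] Ecyc[OF that] by blast
  have claim1: "q i + q (pv i) = 0" if i: "i < p" for i
  proof -
    let ?v = "D ! i"
    have vV: "?v \<in> V" using DV i p_def by auto
    have Epv: "E (pv i) = {?v, D ! pv i}" unfolding E_def using nx_pv[OF i] by (simp add: insert_commute)
    have Edist: "E i \<noteq> E (pv i)"
    proof
      assume "E i = E (pv i)"
      then have "E i = {D ! i, D ! pv i}" using Epv by simp
      then have "{D ! i, D ! nx i} = {D ! i, D ! pv i}" unfolding E_def by simp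
      moreover have "D ! nx i \<noteq> D ! i" using inj[of "nx i" i] nx_lt i unfolding nx_def using p3
        by (auto simp: mod_if split: if_splits)
      ultimately have "D ! nx i = D ! pv i" by (auto simp: doubleton_eq_iff)
      then have "nx i = pv i" using inj nx_lt pv_lt i by blast
      then show False unfolding nx_def pv_def using i p3 by (auto simp: mod_if split: if_splits)
    qed
    have zero: "\<forall>e\<in>edges V w - {E i, E (pv i)}. subdiv_weight V w (Inl ?v) (Inr e) * \<zeta> e = 0"
    proof
      fix e assume e: "e \<in> edges V w - {E i, E (pv i)}"
      show "subdiv_weight V w (Inl ?v) (Inr e) * \<zeta> e = 0"
      proof (cases "?v \<in> e \<and> \<zeta> e \<noteq> 0")
        case False then show ?thesis by auto
      next
        case True
        then have "e \<in> cycle_edges D" using off e by blast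
        then obtain k where k: "k < p" "e = E k" unfolding cycle_edges_def E_def nx_def p_def by auto
        then have "?v = D ! k \<or> ?v = D ! nx k" using True unfolding E_def by auto
        then have "k = i \<or> k = pv i" using inj k(1) nx_lt i nx_eq by blast
        then show ?thesis using e k by auto
      qed
    qed
    have "(\<Sum>e\<in>edges V w. subdiv_weight V w (Inl ?v) (Inr e) * \<zeta> e)
        = (\<Sum>e\<in>{E i, E (pv i)}. subdiv_weight V w (Inl ?v) (Inr e) * \<zeta> e)"
      by (rule sum.mono_neutral_right[OF finite_edges[OF wg]]) (use Eedge i pv_lt zero in auto)
    also have "\<dots> = subdiv_weight V w (Inl ?v) (Inr (E i)) * \<zeta> (E i)
        + subdiv_weight V w (Inl ?v) (Inr (E (pv i))) * \<zeta> (E (pv i))"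
      using Edist by simp
    also have "subdiv_weight V w (Inl ?v) (Inr (E i)) = w (D ! i) (D ! nx i)"
      unfolding E_def by (rule sw_Inl_Inr[OF wg wE[OF i]])
    also have "subdiv_weight V w (Inl ?v) (Inr (E (pv i))) = w (D ! pv i) (D ! nx (pv i))"
    proof -
      have w1: "w (D ! pv i) (D ! nx (pv i)) \<noteq> 0" by (rule wE[OF pv_lt[OF i]])
      then have "w ?v (D ! pv i) \<noteq> 0" using nx_pv[OF i] wsym[OF wg] by metis
      then have "subdiv_weight V w (Inl ?v) (Inr {?v, D ! pv i}) = w ?v (D ! pv i)" by (rule sw_Inl_Inr[OF wg])
      then show ?thesis unfolding Epv using nx_pv[OF i] wsym[OF wg] by metis
    qed
    finally show ?thesis using eq[OF vV] unfolding q_def by simp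
  qed
  have claim2: "q i = (-1) ^ i * q 0" if "i < p" for i
    using that
  proof (induction i)
    case (Suc i)
    have "q (Suc i) + q (pv (Suc i)) = 0" by (rule claim1[OF Suc.prems])
    moreover have "pv (Suc i) = i" unfolding pv_def by simp
    ultimately have "q (Suc i) = - q i" by simp
    then show ?case using Suc by simp
  qed simp
  have "q 0 + q (pv 0) = 0" using claim1 p3 by simp
  moreover have "pv 0 = p - 1" unfolding pv_def by simp
  moreover have "q (p - 1) = q 0"
  proof -
    have "even (p - 1)" using oddD p_def p3 by simp
    then show ?thesis using claim2[of "p - 1"] p3 by simp
  qed
  ultimately have q0: "q 0 = 0" by simp
  obtain i where i: "i < p" "e = E i" using e unfolding cycle_edges_def E_def nx_def p_def by auto
  have "q i = 0" using claim2[OF i(1)] q0 by simp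
  then show ?thesis using wE[OF i(1)] i unfolding q_def by simp
qed

end

context fixes V :: "'v set" and w :: "'v \<Rightarrow> 'v \<Rightarrow> real"
  assumes wg: "wgraph V w"
begin

lemma odd_cw_cycle:
  "cw V w C \<Longrightarrow> odd (length C) \<Longrightarrow> \<exists>D. is_cycle V w D \<and> odd (length D)"
proof (induction "length C" arbitrary: C rule: less_induct)
  case less
  let ?n = "length C"
  have ne: "C \<noteq> []" using less.prems unfolding cw_def by simp
  show ?case
  proof (cases "distinct C")
    case True
    have "?n \<noteq> 1"
    proof
      assume "?n = 1"
      then have "w (C ! 0) (C ! 0) \<noteq> 0" using less.prems(1) unfolding cw_def by force
      then show False using wdiag[OF wg] by simp
    qed
    moreover have "?n \<noteq> 0" using ne by simp
    ultimately have "3 \<le> ?n" using less.prems(2) by presburger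
    then show ?thesis using True less.prems is_cycle_cw by blast
  next
    case False
    then obtain i j where ij: "i < j" "j < ?n" "C ! i = C ! j"
      by (metis distinct_conv_nth linorder_neqE_nat)
    define C' where "C' = rotate i C"
    define k where "k = j - i"
    have cwC': "cw V w C'" unfolding C'_def by (rule cw_rotate[OF less.prems(1)])
    have lenC': "length C' = ?n" unfolding C'_def by simp
    have k: "0 < k" "k < ?n" unfolding k_def using ij by auto
    have "0 < ?n" "i < ?n" using ij by linarith+
    then have C'0: "C' ! 0 = C ! i" unfolding C'_def by (simp add: nth_rotate)
    have C'k: "C' ! k = C ! j" unfolding C'_def k_def using ij by (simp add: nth_rotate)
    have same: "C' ! k = C' ! 0" using C'0 C'k ij by simp
    have setC': "set C' \<subseteq> V" using cwC' unfolding cw_def by simp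
    define C1 where "C1 = take k C'"
    define C2 where "C2 = drop k C'"
    have len1: "length C1 = k" unfolding C1_def using k lenC' by simp
    have len2: "length C2 = ?n - k" unfolding C2_def using lenC' by simp
    have cw1: "cw V w C1"
    proof (rule cw_intro)
      show "C1 \<noteq> []" using len1 k by auto
      show "set C1 \<subseteq> V" unfolding C1_def using setC' set_take_subset by fast
      show "w (C1 ! m) (C1 ! Suc m) \<noteq> 0" if "Suc m < length C1" for m
        using that len1 k lenC' cw_step[OF cwC', of m] unfolding C1_def by simp
      have "C1 \<noteq> []" using len1 k by auto
      then have "last C1 = C' ! (k - 1)" "hd C1 = C' ! 0" unfolding C1_def using len1 k lenC'
        by (simp_all add: last_conv_nth hd_conv_nth)
      moreover have "w (C' ! (k - 1)) (C' ! Suc (k - 1)) \<noteq> 0" using cw_step[OF cwC', of "k - 1"] k lenC' by simp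
      moreover have "Suc (k - 1) = k" using k by simp
      ultimately show "w (last C1) (hd C1) \<noteq> 0" using same by simp
    qed
    have cw2: "cw V w C2"
    proof (rule cw_intro)
      show "C2 \<noteq> []" using len2 k by auto
      show "set C2 \<subseteq> V" unfolding C2_def using setC' set_drop_subset by fast
      show "w (C2 ! m) (C2 ! Suc m) \<noteq> 0" if "Suc m < length C2" for m
        using that len2 k lenC' cw_step[OF cwC', of "k + m"] unfolding C2_def by simp
      have "C2 \<noteq> []" using len2 k by auto
      then have "last C2 = last C'" "hd C2 = C' ! k" unfolding C2_def using k lenC'
        by (simp_all add: last_drop hd_drop_conv_nth)
      moreover have "C' \<noteq> []" using lenC' k by auto
      then have "hd C' = C' ! 0" by (simp add: hd_conv_nth)
      ultimately show "w (last C2) (hd C2) \<noteq> 0" using cw_wrap[OF cwC'] same by simp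
    qed
    have "odd k \<or> odd (?n - k)" using less.prems(2) k by auto
    then show ?thesis
    proof
      assume "odd k"
      then show ?thesis using less.hyps[of C1] cw1 len1 k by simp
    next
      assume "odd (?n - k)"
      then show ?thesis using less.hyps[of C2] cw2 len2 k by simp
    qed
  qed
qed

definition walk where
  "walk P \<longleftrightarrow> P \<noteq> [] \<and> set P \<subseteq> V \<and> (\<forall>i. Suc i < length P \<longrightarrow> w (P ! i) (P ! Suc i) \<noteq> 0)"

lemma walk_snoc: "walk P \<Longrightarrow> w (last P) b \<noteq> 0 \<Longrightarrow> walk (P @ [b])"
  unfolding walk_def
proof (elim conjE, intro conjI allI impI)
  assume ne: "P \<noteq> []" and s: "set P \<subseteq> V" and st: "\<forall>i. Suc i < length P \<longrightarrow> w (P ! i) (P ! Suc i) \<noteq> 0"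
    and b: "w (last P) b \<noteq> 0"
  show "set (P @ [b]) \<subseteq> V" using s wV[OF wg b] by simp
  fix i assume i: "Suc i < length (P @ [b])"
  show "w ((P @ [b]) ! i) ((P @ [b]) ! Suc i) \<noteq> 0"
  proof (cases "Suc i < length P")
    case True then show ?thesis using st by (simp add: nth_append)
  next
    case False
    then have "i = length P - 1" using i by simp
    then show ?thesis using b ne by (simp add: nth_append last_conv_nth)
  qed
qed simp

lemma walk_exists:
  assumes r: "r \<in> V" and rv: "(r, v) \<in> {(a, b). w a b \<noteq> 0}\<^sup>*"
  shows "\<exists>P. walk P \<and> hd P = r \<and> last P = v"
  using rv
proof (induction rule: rtrancl_induct)
  case base
  have "walk [r]" unfolding walk_def using r by simp
  then show ?case by force
next
  case (step y z)
  then obtain P where P: "walk P" "hd P = r" "last P = y" by blast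
  have "walk (P @ [z])" using walk_snoc[OF P(1)] P(3) step by simp
  moreover have "hd (P @ [z]) = r" using P unfolding walk_def by simp
  ultimately show ?case by force
qed

lemma walk_rev: "walk P \<Longrightarrow> walk (rev P)"
  unfolding walk_def
proof (elim conjE, intro conjI allI impI)
  assume st: "\<forall>i. Suc i < length P \<longrightarrow> w (P ! i) (P ! Suc i) \<noteq> 0"
  fix i assume i: "Suc i < length (rev P)"
  have "w (P ! (length P - Suc (Suc i))) (P ! Suc (length P - Suc (Suc i))) \<noteq> 0" using st i by simp
  moreover have "Suc (length P - Suc (Suc i)) = length P - Suc i" using i by simp
  ultimately show "w (rev P ! i) (rev P ! Suc i) \<noteq> 0" using i wsym[OF wg] by (simp add: rev_nth)
qed auto

lemma walk_append: "walk P \<Longrightarrow> walk Q \<Longrightarrow> last P = hd Q \<Longrightarrow> walk (P @ tl Q)"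
  unfolding walk_def
proof (elim conjE, intro conjI allI impI)
  assume ne: "P \<noteq> []" "Q \<noteq> []" and s: "set P \<subseteq> V" "set Q \<subseteq> V"
    and st: "\<forall>i. Suc i < length P \<longrightarrow> w (P ! i) (P ! Suc i) \<noteq> 0"
    and sq: "\<forall>i. Suc i < length Q \<longrightarrow> w (Q ! i) (Q ! Suc i) \<noteq> 0"
    and j: "last P = hd Q"
  show "P @ tl Q \<noteq> []" using ne by simp
  show "set (P @ tl Q) \<subseteq> V" using s ne by (auto dest: list.set_sel(2))
  fix i assume i: "Suc i < length (P @ tl Q)"
  show "w ((P @ tl Q) ! i) ((P @ tl Q) ! Suc i) \<noteq> 0"
  proof (cases "Suc i < length P")
    case True then show ?thesis using st by (simp add: nth_append)
  next
    case False
    have P1: "length P \<ge> 1" using ne by (simp add: Suc_le_eq)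
    define k where "k = i - (length P - 1)"
    have k: "Suc k < length Q" using i False ne unfolding k_def by (cases Q) auto
    have 1: "(P @ tl Q) ! i = Q ! k"
    proof (cases "i = length P - 1")
      case True
      then have "(P @ tl Q) ! i = last P" using ne by (simp add: nth_append last_conv_nth)
      then show ?thesis using j True ne unfolding k_def by (simp add: hd_conv_nth)
    next
      case False
      then have "\<not> i < length P" using \<open>\<not> Suc i < length P\<close> by simp
      then have "(P @ tl Q) ! i = tl Q ! (i - length P)" by (simp add: nth_append)
      also have "\<dots> = Q ! Suc (i - length P)"
      proof (rule nth_tl)
        show "i - length P < length (tl Q)" using k \<open>\<not> i < length P\<close> unfolding k_def by simp
      qed
      also have "Suc (i - length P) = k" unfolding k_def using \<open>\<not> i < length P\<close> P1 by simp
      finally show ?thesis .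
    qed
    have 2: "(P @ tl Q) ! Suc i = Q ! Suc k"
    proof -
      have "\<not> Suc i < length P" by fact
      then have "(P @ tl Q) ! Suc i = tl Q ! (Suc i - length P)" by (simp add: nth_append)
      also have "\<dots> = Q ! Suc (Suc i - length P)"
      proof (rule nth_tl)
        show "Suc i - length P < length (tl Q)" using k \<open>\<not> Suc i < length P\<close> P1 unfolding k_def by simp
      qed
      also have "Suc (Suc i - length P) = Suc k" unfolding k_def using \<open>\<not> Suc i < length P\<close> P1 by simp
      finally show ?thesis .
    qed
    show ?thesis unfolding 1 2 using sq k by simp
  qed
qed

lemma closed_walk_cw:
  assumes L: "walk L" and hl: "hd L = last L" and len: "2 \<le> length L"
  shows "cw V w (butlast L)"
proof (rule cw_intro)
  let ?C = "butlast L"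
  have lenC: "length ?C = length L - 1" by simp
  show "?C \<noteq> []" using len by (cases L) auto
  show "set ?C \<subseteq> V" using L unfolding walk_def by (meson in_set_butlastD subset_iff)
  show "w (?C ! i) (?C ! Suc i) \<noteq> 0" if "Suc i < length ?C" for i
    using that L unfolding walk_def by (simp add: nth_butlast)
  have Lne: "L \<noteq> []" using len by auto
  have "last ?C = L ! (length L - 2)" using len by (simp add: last_conv_nth nth_butlast \<open>?C \<noteq> []\<close> numeral_2_eq_2)
  moreover have "hd ?C = L ! (length L - 1)"
  proof -
    have "hd ?C = hd L" using \<open>?C \<noteq> []\<close> by (cases L) (auto split: if_splits)
    also have "\<dots> = last L" by (rule hl)
    also have "\<dots> = L ! (length L - 1)" using Lne by (simp add: last_conv_nth)
    finally show ?thesis .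
  qed
  moreover have "w (L ! (length L - 2)) (L ! Suc (length L - 2)) \<noteq> 0" using L len unfolding walk_def by simp
  moreover have "Suc (length L - 2) = length L - 1" using len by simp
  ultimately show "w (last ?C) (hd ?C) \<noteq> 0" by simp
qed

lemma odd_cycle_exists:
  assumes conn: "connected_graph V w" and nb: "\<not> bipartite V w"
  shows "\<exists>D. is_cycle V w D \<and> odd (length D)"
proof -
  obtain r where r: "r \<in> V" using conn unfolding connected_graph_def by auto
  have wex: "\<exists>P. walk P \<and> hd P = r \<and> last P = v" if "v \<in> V" for v
    using walk_exists[OF r] conn r that unfolding connected_graph_def by blast
  show ?thesis
  proof (cases "\<exists>v P Q. walk P \<and> hd P = r \<and> last P = v \<and> walk Q \<and> hd Q = r \<and> last Q = v \<and> odd (length P + length Q)")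
    case True
    then obtain v P Q where PQ: "walk P" "hd P = r" "last P = v" "walk Q" "hd Q = r" "last Q = v"
      "odd (length P + length Q)" by blast
    define L where "L = P @ tl (rev Q)"
    have Pne: "P \<noteq> []" "Q \<noteq> []" using PQ unfolding walk_def by auto
    have wL: "walk L" unfolding L_def
      by (rule walk_append[OF PQ(1) walk_rev[OF PQ(4)]]) (use PQ Pne in \<open>simp add: hd_rev\<close>)
    have lenL: "length L = length P + length Q - 1" unfolding L_def using Pne by (cases Q) auto
    have hdL: "hd L = r" unfolding L_def using PQ Pne by simp
    have lastL: "last L = r"
    proof (cases "tl (rev Q) = []")
      case True
      then have "length Q = 1" using Pne by (cases Q rule: rev_cases) auto
      then have "hd Q = last Q" by (cases Q) auto
      then show ?thesis unfolding L_def using True PQ by simp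
    next
      case False
      then have "last L = last (tl (rev Q))" unfolding L_def by simp
      also have "\<dots> = last (rev Q)" using False by (cases "rev Q") auto
      also have "\<dots> = r" using PQ Pne by (simp add: last_rev)
      finally show ?thesis .
    qed
    have "length P \<ge> 1" "length Q \<ge> 1" using Pne by (simp_all add: Suc_le_eq)
    moreover have "length P + length Q \<noteq> 2"
    proof
      assume "length P + length Q = 2"
      then have "even (length P + length Q)" by simp
      then show False using PQ(7) by blast
    qed
    ultimately have len3: "3 \<le> length P + length Q" by linarith
    then have len2: "2 \<le> length L" using lenL by simp
    have cwC: "cw V w (butlast L)" by (rule closed_walk_cw[OF wL _ len2]) (simp add: hdL lastL)
    have "length (butlast L) = length P + length Q - 2" using lenL by simp
    moreover obtain kk where kk: "length P + length Q = 2 * kk + 1" using PQ(7) by (rule oddE)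
    moreover have "1 \<le> kk" using kk len3 by simp
    ultimately have "length (butlast L) = 2 * (kk - 1) + 1" by simp
    then have "odd (length (butlast L))" by simp
    then show ?thesis using odd_cw_cycle[OF cwC] by blast
  next
    case False
    have par: "even (length P1) = even (length P2)"
      if "walk P1" "hd P1 = r" "last P1 = v" "walk P2" "hd P2 = r" "last P2 = v" for v P1 P2
    proof -
      have "\<not> odd (length P1 + length P2)" using False that by blast
      then show ?thesis by simp
    qed
    define f where "f v \<longleftrightarrow> (\<exists>P. walk P \<and> hd P = r \<and> last P = v \<and> even (length P))" for v
    have "bipartite V w"
      unfolding bipartite_def
    proof (intro exI ballI impI)
      fix a b assume a: "a \<in> V" and b: "b \<in> V" and ab: "w a b \<noteq> 0"
      obtain P where P: "walk P" "hd P = r" "last P = a" using wex[OF a] by blast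
      have P': "walk (P @ [b])" "hd (P @ [b]) = r" "last (P @ [b]) = b"
        using walk_snoc[OF P(1)] P ab unfolding walk_def by auto
      have fa: "f a \<longleftrightarrow> even (length P)"
        unfolding f_def using par[OF P] P by blast
      have fb: "f b \<longleftrightarrow> even (length (P @ [b]))"
        unfolding f_def using par[OF P'] P' by blast
      show "f a \<noteq> f b" using fa fb by simp
    qed
    then show ?thesis using nb by simp
  qed
qed

end


lemma mp_parity:
  fixes f :: "'a \<Rightarrow> bool" and A :: "'a \<Rightarrow> 'a \<Rightarrow> real"
  assumes col: "\<And>x y. A x y \<noteq> 0 \<Longrightarrow> f x \<noteq> f y"
  shows "mat_pow W A n a b \<noteq> 0 \<Longrightarrow> (f a = f b) = even n"
proof (induction n arbitrary: a)
  case 0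
  then show ?case by (simp split: if_splits)
next
  case (Suc n)
  then have "(\<Sum>x\<in>W. A a x * mat_pow W A n x b) \<noteq> 0" by simp
  then obtain x where x: "x \<in> W" "A a x * mat_pow W A n x b \<noteq> 0"
    using sum.not_neutral_contains_not_neutral by blast
  then have "f a \<noteq> f x" "(f x = f b) = even n" using col Suc.IH by auto
  then show ?case by auto
qed

lemma main_from_kernels:
  fixes V :: "'v set" and w :: "'v \<Rightarrow> 'v \<Rightarrow> real"
  assumes wg: "wgraph V w"
    and KV: "\<And>z :: 'v \<Rightarrow> real. (\<And>a b. w a b \<noteq> 0 \<Longrightarrow> z a = - z b) \<Longrightarrow> \<forall>v\<in>V. z v = 0"
    and KE: "\<And>\<zeta> :: 'v set \<Rightarrow> real. (\<And>v. v \<in> V \<Longrightarrow> (\<Sum>e\<in>edges V w. subdiv_weight V w (Inl v) (Inr e) * \<zeta> e) = 0)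
               \<Longrightarrow> \<forall>e\<in>edges V w. \<zeta> e = 0"
  shows "\<forall>x\<in>subdiv_verts V w. \<not> sedentary (subdiv_verts V w) (subdiv_weight V w) x \<and>
                 not_sedentary (subdiv_verts V w) (subdiv_weight V w) x"
proof
  fix u assume u: "u \<in> subdiv_verts V w"
  let ?W = "subdiv_verts V w" and ?A = "subdiv_weight V w"
  have fin: "finite ?W" by (rule finW[OF wg])
  have sym: "\<And>x y. ?A x y = ?A y x" by (rule sw_sym[OF wg])
  have inj: "\<forall>b\<in>?W. Z b = 0" if Z: "\<forall>x\<in>?W. (\<Sum>b\<in>?W. ?A x b * Z b) = 0" for Z
  proof -
    define z where "z v = Z (Inl v)" for v
    define \<zeta> where "\<zeta> e = Z (Inr e)" for e
    have "z a = - z b" if ab: "w a b \<noteq> 0" for a b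
    proof -
      have "Inr {a, b} \<in> ?W" using ab edge_pair[OF wg] unfolding subdiv_verts_def by auto
      then have "(\<Sum>y\<in>?W. ?A (Inr {a, b}) y * Z y) = 0" using Z by blast
      then have "w a b * (z a + z b) = 0" unfolding row_Inr[OF wg ab] z_def .
      then show ?thesis using ab by simp
    qed
    then have zV: "\<forall>v\<in>V. z v = 0" by (rule KV)
    have "(\<Sum>e\<in>edges V w. subdiv_weight V w (Inl v) (Inr e) * \<zeta> e) = 0" if v: "v \<in> V" for v
    proof -
      have "Inl v \<in> ?W" using v unfolding subdiv_verts_def by auto
      then have "(\<Sum>y\<in>?W. ?A (Inl v) y * Z y) = 0" using Z by blast
      then show ?thesis unfolding row_Inl[OF wg] \<zeta>_def .
    qed
    then have zE: "\<forall>e\<in>edges V w. \<zeta> e = 0" by (rule KE)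
    show ?thesis
    proof
      fix b assume "b \<in> ?W"
      then show "Z b = 0" using zV zE unfolding subdiv_verts_def z_def \<zeta>_def by auto
    qed
  qed
  obtain y where y: "\<forall>x\<in>?W. (\<Sum>b\<in>?W. ?A x b * y b) = (if x = u then 1 else 0)"
    using inj_imp_solvable[OF fin _ u] inj by blast
  have col: "?A x x' \<noteq> 0 \<Longrightarrow> isl x \<noteq> isl x'" for x x'
    by (cases x; cases x') auto
  have odd0: "mat_pow ?W ?A n u u = 0" if "odd n" for n
    using mp_parity[of ?A isl ?W n u u, OF col] that by auto
  show "\<not> sedentary ?W ?A u \<and> not_sedentary ?W ?A u"
    by (rule analytic_final[OF fin sym u]) (use y odd0 in auto)
qed

lemma part2_KV:
  fixes z :: "'v \<Rightarrow> real"
  assumes wg: "wgraph V w" and conn: "connected_graph V w" and nb: "\<not> bipartite V w"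
    and z: "\<And>a b. w a b \<noteq> 0 \<Longrightarrow> z a = - z b" and v: "v \<in> V"
  shows "z v = 0"
proof (rule ccontr)
  assume nz: "z v \<noteq> 0"
  have same: "\<bar>z u\<bar> = \<bar>z v\<bar>" if "u \<in> V" for u
  proof -
    have "(u, v) \<in> {(a, b). w a b \<noteq> 0}\<^sup>*" using conn that v unfolding connected_graph_def by blast
    then show ?thesis using conn_abs[OF wg, of z] z by blast
  qed
  have "bipartite V w"
    unfolding bipartite_def
  proof (intro exI ballI impI)
    fix a b assume a: "a \<in> V" and b: "b \<in> V" and ab: "w a b \<noteq> 0"
    have "z a = - z b" by (rule z[OF ab])
    moreover have "z a \<noteq> 0" using same[OF a] nz by auto
    ultimately show "(z a > 0) \<noteq> (z b > 0)" by auto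
  qed
  then show False using nb by simp
qed

theorem theorem36:
  fixes V :: "'v set" and w :: "'v \<Rightarrow> 'v \<Rightarrow> real"
  assumes "wgraph V w" and "connected_graph V w" and "unicyclic V w"
  shows "((\<forall>cs. is_cycle V w cs \<longrightarrow>
             nonsingular (subdiv_verts (set cs) (cycle_weight w cs))
                         (subdiv_weight (set cs) (cycle_weight w cs)))
          \<longrightarrow> (\<forall>x\<in>subdiv_verts V w.
                 \<not> sedentary (subdiv_verts V w) (subdiv_weight V w) x \<and>
                 not_sedentary (subdiv_verts V w) (subdiv_weight V w) x))
       \<and> ((unweighted w \<and> \<not> bipartite V w)
          \<longrightarrow> (\<forall>x\<in>subdiv_verts V w.
                 \<not> sedentary (subdiv_verts V w) (subdiv_weight V w) x \<and>
                 not_sedentary (subdiv_verts V w) (subdiv_weight V w) x))"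
proof (intro conjI impI)
  have wg: "wgraph V w" and conn: "connected_graph V w" and uni: "unicyclic V w" using assms by auto
  have "card {cycle_edges cs | cs. is_cycle V w cs} = 1" using uni unfolding unicyclic_def by simp
  then obtain x0 where x0: "{cycle_edges cs | cs. is_cycle V w cs} = {x0}" by (rule card_1_singletonE)
  then have "x0 \<in> {cycle_edges cs | cs. is_cycle V w cs}" by simp
  then obtain cs0 where cs0: "is_cycle V w cs0" by blast
  {
    assume H: "\<forall>cs. is_cycle V w cs \<longrightarrow>
             nonsingular (subdiv_verts (set cs) (cycle_weight w cs))
                         (subdiv_weight (set cs) (cycle_weight w cs))"
    have ns: "nonsingular (subdiv_verts (set cs0) (cycle_weight w cs0)) (subdiv_weight (set cs0) (cycle_weight w cs0))"
      using H cs0 by blast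
    show "\<forall>x\<in>subdiv_verts V w. \<not> sedentary (subdiv_verts V w) (subdiv_weight V w) x \<and>
                 not_sedentary (subdiv_verts V w) (subdiv_weight V w) x"
    proof (rule main_from_kernels[OF wg])
      fix z :: "'v \<Rightarrow> real" assume z: "\<And>a b. w a b \<noteq> 0 \<Longrightarrow> z a = - z b"
      show "\<forall>v\<in>V. z v = 0" using part1_KV[where z=z, OF wg conn cs0 ns z] by blast
    next
      fix \<zeta> :: "'v set \<Rightarrow> real"
      assume eq: "\<And>v. v \<in> V \<Longrightarrow> (\<Sum>e\<in>edges V w. subdiv_weight V w (Inl v) (Inr e) * \<zeta> e) = 0"
      show "\<forall>e\<in>edges V w. \<zeta> e = 0" using part1_KE[OF wg uni cs0 ns eq] by blast
    qed
  }
  {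
    assume B: "unweighted w \<and> \<not> bipartite V w"
    then have nb: "\<not> bipartite V w" by simp
    obtain D where D: "is_cycle V w D" "odd (length D)" using odd_cycle_exists[OF wg conn nb] by blast
    show "\<forall>x\<in>subdiv_verts V w. \<not> sedentary (subdiv_verts V w) (subdiv_weight V w) x \<and>
                 not_sedentary (subdiv_verts V w) (subdiv_weight V w) x"
    proof (rule main_from_kernels[OF wg])
      fix z :: "'v \<Rightarrow> real" assume z: "\<And>a b. w a b \<noteq> 0 \<Longrightarrow> z a = - z b"
      show "\<forall>v\<in>V. z v = 0" using part2_KV[where z=z, OF wg conn nb z] by blast
    next
      fix \<zeta> :: "'v set \<Rightarrow> real"
      assume eq: "\<And>v. v \<in> V \<Longrightarrow> (\<Sum>e\<in>edges V w. subdiv_weight V w (Inl v) (Inr e) * \<zeta> e) = 0"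
      have off: "\<And>e. e \<in> edges V w \<Longrightarrow> e \<notin> cycle_edges D \<Longrightarrow> \<zeta> e = 0"
        using off_cycle_zero[OF wg uni D(1) eq] by blast
      show "\<forall>e\<in>edges V w. \<zeta> e = 0"
      proof
        fix e assume e: "e \<in> edges V w"
        show "\<zeta> e = 0"
        proof (cases "e \<in> cycle_edges D")
          case True then show ?thesis using odd_cycle_KE[OF wg D eq off True] by blast
        next
          case False then show ?thesis using off e by blast
        qed
      qed
    qed
  }
qed

end
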